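(* Let $0<\alpha<1$, $l,T>0$, integers $N,M\ge2$, $h=l/N$, $x_i=ih$, $\tau=T/M$, $t_j=j\tau$. Let $k(t)\ge c_1>0$ and $q(t)\ge0$ be given functions of $t$ only, $a^{j+1}=k(t_{j+1})$, $d^{j+1}=q(t_{j+1})$, and let $\varphi_i^{j+1}$ be given grid data. Consider the compact difference scheme $$\Delta_{0t_{j+1}}^{\alpha}\mathcal{H}_hy_i=a^{j+1}y_{\bar xx,i}^{j+1}-d^{j+1}\mathcal{H}_hy_i^{j+1}+\mathcal{H}_h\varphi_i^{j+1},\quad i=1,\dots,N-1,\ j=1,\dots,M-1,$$ $$y_0^j=y_N^j=0\ (j=0,\dots,M),\qquad y_i^0=u_0(x_i)\ (i=0,\dots,N),$$ with $y^1$ given. Then the scheme is unconditionally stable, and its solution satisfies $$\sum_{j=1}^{M-1}\left(\|\mathcal{H}_hy^{j+1}\|_0^2+\|y_{\bar x}^{j+1}]|_0^2\right)\tau\le M_2\left(\|\mathcal{H}_hy^1\|_0^2+\|\mathcal{H}_hy^0\|_0^2+\sum_{j=1}^{M-1}\|\mathcal{H}_h\varphi^{j+1}\|_0^2\tau\right),$$ where $M_2>0$ is a number independent of $h$ and $\tau$.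
   Context: Notation: $y_i^j$ is the value at $(x_i,t_j)$; $y_{\bar x,i}=(y_i-y_{i-1})/h$; $y_{\bar xx,i}=(y_{i+1}-2y_i+y_{i-1})/h^2$; $\mathcal{H}_hv_i=v_i+\frac{h^2}{12}v_{\bar xx,i}$ for $i=1,\dots,N-1$; $\|y\|_0^2=\sum_{i=1}^{N-1}y_i^2h$; $\|y]|_0^2=\sum_{i=1}^{N}y_i^2h$. The L2 operator acting on a grid function $w$ is $\Delta_{0t_{j+1}}^{\alpha}w_i=\frac{\tau^{-\alpha}}{\Gamma(2-\alpha)}\sum_{s=0}^{j}c_{j-s}^{(\alpha)}(w_i^{s+1}-w_i^s)$, with $a_l^{(\alpha)}=(l+1)^{1-\alpha}-l^{1-\alpha}$, $b_l^{(\alpha)}=\frac{1}{2-\alpha}[(l+1)^{2-\alpha}-l^{2-\alpha}]-\frac12[(l+1)^{1-\alpha}+l^{1-\alpha}]$ and the $j$-dependent coefficients: for $j=1$: $c_0^{(\alpha)}=a_0^{(\alpha)}+b_0^{(\alpha)}+b_1^{(\alpha)}$, $c_1^{(\alpha)}=a_1^{(\alpha)}-b_1^{(\alpha)}-b_0^{(\alpha)}$; for $j=2$: $c_0^{(\alpha)}=a_0^{(\alpha)}+b_0^{(\alpha)}$, $c_1^{(\alpha)}=a_1^{(\alpha)}+b_1^{(\alpha)}+b_2^{(\alpha)}-b_0^{(\alpha)}$, $c_2^{(\alpha)}=a_2^{(\alpha)}-b_2^{(\alpha)}-b_1^{(\alpha)}$; for $j\ge3$: $c_0^{(\alpha)}=a_0^{(\alpha)}+b_0^{(\alpha)}$,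 $c_s^{(\alpha)}=a_s^{(\alpha)}+b_s^{(\alpha)}-b_{s-1}^{(\alpha)}$ ($1\le s\le j-2$), $c_{j-1}^{(\alpha)}=a_{j-1}^{(\alpha)}+b_{j-1}^{(\alpha)}+b_j^{(\alpha)}-b_{j-2}^{(\alpha)}$, $c_j^{(\alpha)}=a_j^{(\alpha)}-b_j^{(\alpha)}-b_{j-1}^{(\alpha)}$. *)

theory Defs
  imports "HOL-Analysis.Analysis"
begin

text \<open>Grid functions are y :: nat \<Rightarrow> nat \<Rightarrow> real, with y i j the value at (x_i, t_j).\<close>

definition l2a :: "real \<Rightarrow> nat \<Rightarrow> real" where
  "l2a \<alpha> l = (real l + 1) powr (1 - \<alpha>) - real l powr (1 - \<alpha>)"

definition l2b :: "real \<Rightarrow> nat \<Rightarrow> real" where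
  "l2b \<alpha> l = 1 / (2 - \<alpha>) * ((real l + 1) powr (2 - \<alpha>) - real l powr (2 - \<alpha>))
              - 1 / 2 * ((real l + 1) powr (1 - \<alpha>) + real l powr (1 - \<alpha>))"

definition l2c :: "real \<Rightarrow> nat \<Rightarrow> nat \<Rightarrow> real" where
  "l2c \<alpha> j s =
    (if j = 1 then
       (if s = 0 then l2a \<alpha> 0 + l2b \<alpha> 0 + l2b \<alpha> 1
        else l2a \<alpha> 1 - l2b \<alpha> 1 - l2b \<alpha> 0)
     else if j = 2 then
       (if s = 0 then l2a \<alpha> 0 + l2b \<alpha> 0
        else if s = 1 then l2a \<alpha> 1 + l2b \<alpha> 1 + l2b \<alpha> 2 - l2b \<alpha> 0
        else l2a \<alpha> 2 - l2b \<alpha> 2 - l2b \<alpha> 1)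
     else
       (if s = 0 then l2a \<alpha> 0 + l2b \<alpha> 0
        else if s \<le> j - 2 then l2a \<alpha> s + l2b \<alpha> s - l2b \<alpha> (s - 1)
        else if s = j - 1 then l2a \<alpha> (j-1) + l2b \<alpha> (j-1) + l2b \<alpha> j - l2b \<alpha> (j-2)
        else l2a \<alpha> j - l2b \<alpha> j - l2b \<alpha> (j-1)))"

text \<open>L2 approximation of the Caputo derivative at t_{j+1}, applied to grid function w at node i.\<close>
definition L2op :: "real \<Rightarrow> real \<Rightarrow> (nat \<Rightarrow> nat \<Rightarrow> real) \<Rightarrow> nat \<Rightarrow> nat \<Rightarrow> real" where
  "L2op \<alpha> \<tau> w i j = \<tau> powr (- \<alpha>) / Gamma (2 - \<alpha>) *
      (\<Sum>s = 0..j. l2c \<alpha> j (j - s) * (w i (s + 1) - w i s))"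

definition dxx :: "real \<Rightarrow> (nat \<Rightarrow> nat \<Rightarrow> real) \<Rightarrow> nat \<Rightarrow> nat \<Rightarrow> real" where
  "dxx h y i j = (y (i + 1) j - 2 * y i j + y (i - 1) j) / h^2"

definition dxb :: "real \<Rightarrow> (nat \<Rightarrow> nat \<Rightarrow> real) \<Rightarrow> nat \<Rightarrow> nat \<Rightarrow> real" where
  "dxb h y i j = (y i j - y (i - 1) j) / h"

definition Hh :: "real \<Rightarrow> (nat \<Rightarrow> nat \<Rightarrow> real) \<Rightarrow> nat \<Rightarrow> nat \<Rightarrow> real" where
  "Hh h v i j = v i j + h^2 / 12 * dxx h v i j"

definition nrm0sq :: "real \<Rightarrow> nat \<Rightarrow> (nat \<Rightarrow> nat \<Rightarrow> real) \<Rightarrow> nat \<Rightarrow> real" where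
  "nrm0sq h N v j = (\<Sum>i = 1..N - 1. (v i j)^2 * h)"

definition nrm0bsq :: "real \<Rightarrow> nat \<Rightarrow> (nat \<Rightarrow> nat \<Rightarrow> real) \<Rightarrow> nat \<Rightarrow> real" where
  "nrm0bsq h N v j = (\<Sum>i = 1..N. (v i j)^2 * h)"

end

theory Submission
  imports Defs
begin

definition Dp :: "real \<Rightarrow> nat \<Rightarrow> real \<Rightarrow> real" where
  "Dp e m x = (\<Prod>i<m. (e - real i)) * x powr (e - real m)"

lemma Dp_deriv:
  assumes "0 < x"
  shows "DERIV (Dp e m) x :> Dp e (Suc m) x"
proof -
  have "DERIV (\<lambda>x. x powr (e - real m)) x :> (e - real m) * x powr (e - real m - 1)"
    using has_real_derivative_powr[OF assms] by simp
  then have "DERIV (\<lambda>x. (\<Prod>i<m. (e - real i)) * x powr (e - real m)) x :>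
      (\<Prod>i<m. (e - real i)) * ((e - real m) * x powr (e - real m - 1))"
    by (rule DERIV_cmult)
  moreover have "(\<Prod>i<m. (e - real i)) * ((e - real m) * x powr (e - real m - 1)) = Dp e (Suc m) x"
    by (simp add: Dp_def algebra_simps)
  ultimately show ?thesis unfolding Dp_def[abs_def] by simp
qed

lemma Dp0: "Dp e 0 x = x powr e" by (simp add: Dp_def)

lemma taylor_up_pow:
  assumes "0 < c" "c < b" "0 < n"
  shows "\<exists>t. c < t \<and> t < b \<and> b powr e = (\<Sum>m<n. Dp e m c / fact m * (b - c)^m) + Dp e n t / fact n * (b - c)^n"
proof -
  have "\<exists>t. c < t \<and> t < b \<and> (Dp e 0) b = (\<Sum>m<n. Dp e m c / fact m * (b - c)^m) + Dp e n t / fact n * (b - c)^n"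
    apply (rule Taylor_up[where a = c and diff = "Dp e"])
    using assms by (auto intro!: Dp_deriv)
  then show ?thesis by (simp add: Dp0)
qed

lemma taylor_down_pow:
  assumes "0 < a" "a < c" "0 < n"
  shows "\<exists>t. a < t \<and> t < c \<and> a powr e = (\<Sum>m<n. Dp e m c / fact m * (a - c)^m) + Dp e n t / fact n * (a - c)^n"
proof -
  have "\<exists>t. a < t \<and> t < c \<and> (Dp e 0) a = (\<Sum>m<n. Dp e m c / fact m * (a - c)^m) + Dp e n t / fact n * (a - c)^n"
    apply (rule Taylor_down[where b = c and diff = "Dp e"])
    using assms by (auto intro!: Dp_deriv)
  then show ?thesis by (simp add: Dp0)
qed

lemma Dp_shift: "Dp (1 + e) (Suc m) y = (1 + e) * Dp e m y"
proof -
  have "(\<Prod>i<Suc m. (1 + e - real i)) = (1 + e) * (\<Prod>i<m. (e - real i))"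
    by (subst prod.lessThan_Suc_shift) (simp add: algebra_simps)
  moreover have "1 + e - real (Suc m) = e - real m" by simp
  ultimately show ?thesis by (simp add: Dp_def)
qed

definition bf :: "real \<Rightarrow> real \<Rightarrow> real" where
  "bf e x = ((x+1) powr (1+e) - x powr (1+e)) / (1+e) - 1/2 * ((x+1) powr e + x powr e)"

lemma bf_taylor:
  assumes x: "0 < x" and e: "0 < e"
  shows "\<exists>t1 t2 t3 t4. x < t1 \<and> t1 < x+1 \<and> x < t2 \<and> t2 < x+1 \<and> x < t3 \<and> t3 < x+1 \<and> x < t4 \<and> t4 < x+1 \<and>
     bf e x = - Dp e 2 (x + 1/2) / 12 + (Dp e 3 t1 - Dp e 3 t2) / 384 - (Dp e 3 t3 - Dp e 3 t4) / 96"
proof -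
  define c where "c = x + 1/2"
  have c: "0 < c" "x < c" "c < x + 1" using x by (auto simp: c_def)
  obtain t1 where t1: "c < t1" "t1 < x+1" and G1: "(x+1) powr (1+e) = (\<Sum>m<4. Dp (1+e) m c / fact m * (x+1 - c)^m) + Dp (1+e) 4 t1 / fact 4 * (x+1 - c)^4"
    using taylor_up_pow[of c "x+1" 4 "1+e"] c by auto
  obtain t2 where t2: "x < t2" "t2 < c" and G2: "x powr (1+e) = (\<Sum>m<4. Dp (1+e) m c / fact m * (x - c)^m) + Dp (1+e) 4 t2 / fact 4 * (x - c)^4"
    using taylor_down_pow[of x c 4 "1+e"] c x by auto
  obtain t3 where t3: "c < t3" "t3 < x+1" and F1: "(x+1) powr e = (\<Sum>m<3. Dp e m c / fact m * (x+1 - c)^m) + Dp e 3 t3 / fact 3 * (x+1 - c)^3"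
    using taylor_up_pow[of c "x+1" 3 e] c by auto
  obtain t4 where t4: "x < t4" "t4 < c" and F2: "x powr e = (\<Sum>m<3. Dp e m c / fact m * (x - c)^m) + Dp e 3 t4 / fact 3 * (x - c)^3"
    using taylor_down_pow[of x c 3 e] c x by auto
  have h1: "x + 1 - c = 1/2" "x - c = -1/2" by (auto simp: c_def)
  have s4: "\<And>g::nat\<Rightarrow>real. (\<Sum>m<4. g m) = g 0 + g 1 + g 2 + g 3"
    by (simp add: eval_nat_numeral)
  have s3: "\<And>g::nat\<Rightarrow>real. (\<Sum>m<3. g m) = g 0 + g 1 + g 2"
    by (simp add: eval_nat_numeral)
  have sh: "\<And>m y. Dp (1+e) (Suc m) y = (1+e) * Dp e m y" by (rule Dp_shift)
  have sh1: "Dp (1+e) 1 c = (1+e) * Dp e 0 c" using sh[of 0 c] by simp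
  have sh2: "Dp (1+e) 2 c = (1+e) * Dp e 1 c" using sh[of 1 c] by (simp add: numeral_2_eq_2)
  have sh3: "Dp (1+e) 3 c = (1+e) * Dp e 2 c" using sh[of 2 c] by (simp add: numeral_3_eq_3)
  have sh4: "\<And>y. Dp (1+e) 4 y = (1+e) * Dp e 3 y" using sh[of 3] by (simp add: eval_nat_numeral)
  have fa: "fact 2 = (2::real)" "fact 3 = (6::real)" "fact 4 = (24::real)"
    by (simp_all add: fact_numeral)
  have ne: "1 + e \<noteq> 0" using e by simp
  have eq: "bf e x = - Dp e 2 c / 12 + (Dp e 3 t1 - Dp e 3 t2) / 384 - (Dp e 3 t3 - Dp e 3 t4) / 96"
    unfolding bf_def G1 G2 F1 F2 s4 s3 h1
    using ne sh[of 0 c] by (simp add: sh1 sh2 sh3 sh4 fa field_simps)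
  show ?thesis
    apply (rule exI[of _ t1], rule exI[of _ t2], rule exI[of _ t3], rule exI[of _ t4])
    using eq t1 t2 t3 t4 c unfolding c_def by auto
qed

lemma Dp1: "Dp e 1 x = e * x powr (e - 1)" by (simp add: Dp_def)
lemma Dp2: "Dp e 2 x = e * (e - 1) * x powr (e - 2)" by (simp add: Dp_def eval_nat_numeral)
lemma Dp3: "Dp e 3 x = e * (e - 1) * (e - 2) * x powr (e - 3)" by (simp add: Dp_def eval_nat_numeral)

lemma Dp3_anti:
  assumes "0 < e" "e < 1" "0 < x" "x \<le> y"
  shows "Dp e 3 y \<le> Dp e 3 x" "0 < Dp e 3 y"
proof -
  have "0 < (e - 1) * (e - 2)" using assms by (intro mult_neg_neg) auto
  then have k: "0 < e * (e - 1) * (e - 2)" using assms by (simp add: mult.assoc)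
  have "y powr (e - 3) \<le> x powr (e - 3)" using assms by (intro powr_mono2') auto
  then show "Dp e 3 y \<le> Dp e 3 x" unfolding Dp3 using k by (simp add: mult_left_mono)
  show "0 < Dp e 3 y" unfolding Dp3 using k assms by simp
qed

lemma l2b_bf: "l2b \<alpha> k = bf (1 - \<alpha>) (real k)"
proof -
  have "1 + (1 - \<alpha>) = 2 - \<alpha>" by simp
  then show ?thesis unfolding l2b_def bf_def by (simp add: algebra_simps diff_divide_distrib)
qed

lemma l2b_0: "l2b \<alpha> 0 = 1/(2-\<alpha>) - 1/2" unfolding l2b_def by simp
lemma l2a_0: "l2a \<alpha> 0 = 1" unfolding l2a_def by simp

lemma bf_two_sided:
  assumes "0 < \<alpha>" "\<alpha> < 1" "0 < x"
  shows "bf (1-\<alpha>) x \<le> \<alpha>*(1-\<alpha>) * ((x + 1/2) powr (-1-\<alpha>) / 12 + 5*(1+\<alpha>) * x powr (-2-\<alpha>) / 384)"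
    and "bf (1-\<alpha>) x \<ge> \<alpha>*(1-\<alpha>) * ((x + 1/2) powr (-1-\<alpha>) / 12 - 5*(1+\<alpha>) * x powr (-2-\<alpha>) / 384)"
proof -
  define e where "e = 1 - \<alpha>"
  have e: "0 < e" "e < 1" using assms by (auto simp: e_def)
  obtain t1 t2 t3 t4 where t: "x < t1" "x < t2" "x < t3" "x < t4"
    and eq: "bf e x = - Dp e 2 (x + 1/2) / 12 + (Dp e 3 t1 - Dp e 3 t2) / 384 - (Dp e 3 t3 - Dp e 3 t4) / 96"
    using bf_taylor[OF assms(3) e(1)] by blast
  have e2: "e - 2 = -1-\<alpha>" by (simp add: e_def)
  have D2: "Dp e 2 (x + 1/2) = - (\<alpha>*(1-\<alpha>) * (x + 1/2) powr (-1-\<alpha>))"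
    unfolding Dp2 e2 unfolding e_def by (simp add: algebra_simps)
  have ex: "e - 3 = -2-\<alpha>" by (simp add: e_def)
  have Dx: "Dp e 3 x = \<alpha>*(1-\<alpha>)*(1+\<alpha>) * x powr (-2-\<alpha>)"
    unfolding Dp3 ex unfolding e_def by (simp add: algebra_simps)
  have b1: "\<And>t. x < t \<Longrightarrow> 0 < Dp e 3 t"
    using Dp3_anti[OF e assms(3)] by auto
  have b2: "\<And>t. x < t \<Longrightarrow> Dp e 3 t \<le> Dp e 3 x"
    using Dp3_anti[OF e assms(3)] by auto
  have u: "(Dp e 3 t1 - Dp e 3 t2) / 384 - (Dp e 3 t3 - Dp e 3 t4) / 96 \<le> 5 * Dp e 3 x / 384"
    using b1[OF t(1)] b1[OF t(2)] b1[OF t(3)] b1[OF t(4)] b2[OF t(1)] b2[OF t(2)] b2[OF t(3)] b2[OF t(4)] by (simp add: field_simps)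
  have l: "(Dp e 3 t1 - Dp e 3 t2) / 384 - (Dp e 3 t3 - Dp e 3 t4) / 96 \<ge> - 5 * Dp e 3 x / 384"
    using b1[OF t(1)] b1[OF t(2)] b1[OF t(3)] b1[OF t(4)] b2[OF t(1)] b2[OF t(2)] b2[OF t(3)] b2[OF t(4)] by (simp add: field_simps)
  define R where "R = (Dp e 3 t1 - Dp e 3 t2) / 384 - (Dp e 3 t3 - Dp e 3 t4) / 96"
  have eq': "bf e x = - Dp e 2 (x + 1/2) / 12 + R" using eq unfolding R_def by simp
  have f1: "bf e x \<le> - Dp e 2 (x + 1/2) / 12 + 5 * Dp e 3 x / 384" using eq' u unfolding R_def[symmetric] by linarith
  have f2: "bf e x \<ge> - Dp e 2 (x + 1/2) / 12 - 5 * Dp e 3 x / 384" using eq' l unfolding R_def[symmetric] by linarith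
  show "bf (1-\<alpha>) x \<le> \<alpha>*(1-\<alpha>) * ((x + 1/2) powr (-1-\<alpha>) / 12 + 5*(1+\<alpha>) * x powr (-2-\<alpha>) / 384)"
    using f1 unfolding D2 Dx e_def[symmetric] by (simp add: algebra_simps)
  show "bf (1-\<alpha>) x \<ge> \<alpha>*(1-\<alpha>) * ((x + 1/2) powr (-1-\<alpha>) / 12 - 5*(1+\<alpha>) * x powr (-2-\<alpha>) / 384)"
    using f2 unfolding D2 Dx e_def[symmetric] by (simp add: algebra_simps)
qed

lemma pw_anti: "0 < (a::real) \<Longrightarrow> a \<le> b \<Longrightarrow> 0 \<le> p \<Longrightarrow> b powr (-p) \<le> a powr (-p)"
  using powr_mono2'[of "-p" a b] by auto

lemma pw_scale:
  fixes a b k p q :: real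
  assumes "0 < b" "b \<le> k * a" "1 \<le> k" "0 \<le> p" "p \<le> q"
  shows "a powr (-p) \<le> k powr q * b powr (-p)"
proof -
  have "b / k \<le> a" using assms by (simp add: divide_le_eq mult.commute)
  moreover have "0 < b / k" using assms by simp
  ultimately have "a powr (-p) \<le> (b / k) powr (-p)" using assms(4) by (intro pw_anti) auto
  also have "\<dots> = b powr (-p) / k powr (-p)" using assms by (simp add: powr_divide)
  also have "\<dots> = k powr p * b powr (-p)" by (simp add: powr_minus divide_inverse)
  also have "\<dots> \<le> k powr q * b powr (-p)"
    using assms powr_mono[of p q k] by (intro mult_right_mono) auto
  finally show ?thesis .
qed

lemma pw_exp_mono: "1 \<le> (x::real) \<Longrightarrow> a \<le> b \<Longrightarrow> x powr a \<le> x powr b"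
  using powr_mono by blast

lemma lin1: "(A::real) \<le> X \<Longrightarrow> T \<le> 10*X \<Longrightarrow> 0 \<le> X \<Longrightarrow> A/12 + T/384 \<le> X/8" by linarith
lemma lin2: "T \<le> 10*X \<Longrightarrow> (X::real) \<le> (9/4)*A \<Longrightarrow> 0 \<le> X \<Longrightarrow> 0 \<le> A/12 - T/384" by linarith

lemma bf_up:
  assumes "0 < \<alpha>" "\<alpha> < 1" "1 \<le> x"
  shows "bf (1-\<alpha>) x \<le> \<alpha>*(1-\<alpha>)/8 * x powr (-1-\<alpha>)"
proof -
  have X: "0 \<le> \<alpha>*(1-\<alpha>)" using assms by simp
  have p1: "(x + 1/2) powr (-1-\<alpha>) \<le> x powr (-1-\<alpha>)"
    using pw_anti[of x "x+1/2" "1+\<alpha>"] assms by simp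
  have p2: "x powr (-2-\<alpha>) \<le> x powr (-1-\<alpha>)" using assms powr_mono[of "-2-\<alpha>" "-1-\<alpha>" x] by auto
  have "(x + 1/2) powr (-1-\<alpha>) / 12 + 5*(1+\<alpha>) * x powr (-2-\<alpha>) / 384 \<le> x powr (-1-\<alpha>) / 8"
  proof -
    have "5*(1+\<alpha>) * x powr (-2-\<alpha>) \<le> 10 * x powr (-1-\<alpha>)"
      using p2 assms by (intro mult_mono) auto
    then show ?thesis by (rule lin1[OF p1]) simp
  qed
  then have "\<alpha>*(1-\<alpha>) * ((x + 1/2) powr (-1-\<alpha>) / 12 + 5*(1+\<alpha>) * x powr (-2-\<alpha>) / 384) \<le> \<alpha>*(1-\<alpha>) * (x powr (-1-\<alpha>) / 8)"
    using X by (rule mult_left_mono)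
  moreover have "0 < x" using assms by simp
  ultimately have "bf (1-\<alpha>) x \<le> \<alpha>*(1-\<alpha>) * (x powr (-1-\<alpha>) / 8)"
    using order_trans[OF bf_two_sided(1)[OF assms(1) assms(2) \<open>0 < x\<close>]] by blast
  then show ?thesis by (simp add: algebra_simps)
qed

lemma bf_sharp:
  assumes "0 < \<alpha>" "\<alpha> < 1" "1 \<le> x"
  shows "bf (1-\<alpha>) x \<le> \<alpha>*(1-\<alpha>) * ((x + 1/2) powr (-1-\<alpha>) / 12 + 10 * x powr (-2-\<alpha>) / 384)"
proof -
  have X: "0 \<le> \<alpha>*(1-\<alpha>)" using assms by simp
  have "5*(1+\<alpha>) * x powr (-2-\<alpha>) \<le> 10 * x powr (-2-\<alpha>)"
    using mult_right_mono[of "5*(1+\<alpha>)" 10 "x powr (-2-\<alpha>)"] assms by simp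
  then have "\<alpha>*(1-\<alpha>) * ((x + 1/2) powr (-1-\<alpha>) / 12 + 5*(1+\<alpha>) * x powr (-2-\<alpha>) / 384) \<le> \<alpha>*(1-\<alpha>) * ((x + 1/2) powr (-1-\<alpha>) / 12 + 10 * x powr (-2-\<alpha>) / 384)"
    using X by (intro mult_left_mono) linarith+
  moreover have "0 < x" using assms by simp
  ultimately show ?thesis using order_trans[OF bf_two_sided(1)[OF assms(1) assms(2) \<open>0 < x\<close>]] by blast
qed

lemma bf_nonneg:
  assumes "0 < \<alpha>" "\<alpha> < 1" "1 \<le> x"
  shows "0 \<le> bf (1-\<alpha>) x"
proof -
  have X: "0 \<le> \<alpha>*(1-\<alpha>)" using assms by simp
  have p1: "x powr (-(1+\<alpha>)) \<le> (3/2) powr 2 * (x + 1/2) powr (-(1+\<alpha>))"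
    using assms by (intro pw_scale) auto
  have p2: "x powr (-2-\<alpha>) \<le> x powr (-1-\<alpha>)" using assms powr_mono[of "-2-\<alpha>" "-1-\<alpha>" x] by auto
  have q: "(3/2::real) powr 2 = 9/4" by (simp add: powr_numeral power2_eq_square)
  have "0 \<le> (x + 1/2) powr (-1-\<alpha>) / 12 - 5*(1+\<alpha>) * x powr (-2-\<alpha>) / 384"
  proof -
    have "5*(1+\<alpha>) * x powr (-2-\<alpha>) \<le> 10 * x powr (-1-\<alpha>)"
      using p2 assms by (intro mult_mono) auto
    moreover have "x powr (-1-\<alpha>) \<le> (9/4) * (x + 1/2) powr (-1-\<alpha>)" using p1 q by simp
    ultimately show ?thesis by (rule lin2) simp
  qed
  then have "0 \<le> \<alpha>*(1-\<alpha>) * ((x + 1/2) powr (-1-\<alpha>) / 12 - 5*(1+\<alpha>) * x powr (-2-\<alpha>) / 384)"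
    using X by simp
  then show ?thesis using bf_two_sided(2)[of \<alpha> x] assms by linarith
qed

lemma Dp2_neg: "0 < (e::real) \<Longrightarrow> e < 1 \<Longrightarrow> 0 < x \<Longrightarrow> Dp e 2 x < 0"
  unfolding Dp2 by (intro mult_neg_pos mult_pos_neg) auto

lemma a_low:
  fixes \<alpha> x :: real
  assumes "0 < \<alpha>" "\<alpha> < 1" "0 < x"
  shows "(x+1) powr (1-\<alpha>) - x powr (1-\<alpha>) \<ge> (1-\<alpha>) * (x+1) powr (-\<alpha>)"
proof -
  define e where "e = 1 - \<alpha>"
  have e: "0 < e" "e < 1" unfolding e_def using assms by linarith+
  obtain t where t: "x < t" "t < x+1" and F: "x powr e = (\<Sum>m<2. Dp e m (x+1) / fact m * (x - (x+1))^m) + Dp e 2 t / fact 2 * (x - (x+1))^2"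
    using taylor_down_pow[of x "x+1" 2 e] assms by auto
  have s2: "\<And>g::nat\<Rightarrow>real. (\<Sum>m<2. g m) = g 0 + g 1" by (simp add: eval_nat_numeral)
  have "Dp e 2 t < 0" using Dp2_neg[OF e] t assms by simp
  then have "(x+1) powr e - x powr e \<ge> Dp e 1 (x+1)"
    unfolding F s2 by (simp add: Dp0)
  moreover have "Dp e 1 (x+1) = (1-\<alpha>) * (x+1) powr (-\<alpha>)" unfolding Dp1 e_def by simp
  ultimately show ?thesis by (simp add: e_def)
qed

lemma a_diff:
  fixes \<alpha> x :: real
  assumes "0 < \<alpha>" "\<alpha> < 1" "0 < x"
  shows "((x+1) powr (1-\<alpha>) - x powr (1-\<alpha>)) - ((x+2) powr (1-\<alpha>) - (x+1) powr (1-\<alpha>)) \<ge> \<alpha>*(1-\<alpha>) * (x+1) powr (-1-\<alpha>)"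
proof -
  define e where "e = 1 - \<alpha>"
  have e: "0 < e" "e < 1" unfolding e_def using assms by linarith+
  obtain t1 where t1: "x+1 < t1" "t1 < x+2" and F1: "(x+2) powr e = (\<Sum>m<3. Dp e m (x+1) / fact m * ((x+2) - (x+1))^m) + Dp e 3 t1 / fact 3 * ((x+2) - (x+1))^3"
    using taylor_up_pow[of "x+1" "x+2" 3 e] assms by auto
  obtain t2 where t2: "x < t2" "t2 < x+1" and F2: "x powr e = (\<Sum>m<3. Dp e m (x+1) / fact m * (x - (x+1))^m) + Dp e 3 t2 / fact 3 * (x - (x+1))^3"
    using taylor_down_pow[of x "x+1" 3 e] assms by auto
  have s3: "\<And>g::nat\<Rightarrow>real. (\<Sum>m<3. g m) = g 0 + g 1 + g 2" by (simp add: eval_nat_numeral)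
  have d: "Dp e 3 t1 \<le> Dp e 3 t2" using Dp3_anti[OF e, of t2 t1] t1 t2 assms by simp
  have fa: "fact 2 = (2::real)" "fact 3 = (6::real)" by (simp_all add: fact_numeral)
  have "((x+1) powr e - x powr e) - ((x+2) powr e - (x+1) powr e) = - Dp e 2 (x+1) - (Dp e 3 t1 - Dp e 3 t2)/6"
    unfolding F1 F2 s3 by (simp add: Dp0 fa field_simps)
  moreover have "- Dp e 2 (x+1) = \<alpha>*(1-\<alpha>) * (x+1) powr (-1-\<alpha>)"
  proof -
    have "e - 2 = -1-\<alpha>" by (simp add: e_def)
    then show ?thesis unfolding Dp2 by (simp add: e_def algebra_simps)
  qed
  ultimately show ?thesis using d by (simp add: e_def)
qed

lemma l2a_nonneg: "0 < \<alpha> \<Longrightarrow> \<alpha> < 1 \<Longrightarrow> 0 \<le> l2a \<alpha> m"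
  unfolding l2a_def by (intro diff_ge_0_iff_ge[THEN iffD2] powr_mono2) auto

lemma l2a_sum: "(\<Sum>j<n. l2a \<alpha> j) = real n powr (1-\<alpha>)"
  by (induction n) (auto simp: l2a_def add.commute)

definition rr :: "real \<Rightarrow> nat \<Rightarrow> real" where
  "rr \<alpha> m = l2a \<alpha> m + l2b \<alpha> m - (if m = 0 then 0 else l2b \<alpha> (m - 1))"

lemma b_nonneg:
  assumes "0 < \<alpha>" "\<alpha> < 1"
  shows "0 \<le> l2b \<alpha> k"
proof (cases "k = 0")
  case True
  then show ?thesis using assms by (simp add: l2b_0 field_simps)
next
  case False
  then show ?thesis using bf_nonneg[OF assms, of "real k"] by (simp add: l2b_bf)
qed

lemma b_up:
  assumes "0 < \<alpha>" "\<alpha> < 1" "1 \<le> k"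
  shows "l2b \<alpha> k \<le> \<alpha>*(1-\<alpha>)/8 * real k powr (-1-\<alpha>)"
  using bf_up[OF assms(1,2), of "real k"] assms(3) by (simp add: l2b_bf)

lemma b_sharp:
  assumes "0 < \<alpha>" "\<alpha> < 1" "1 \<le> k"
  shows "l2b \<alpha> k \<le> \<alpha>*(1-\<alpha>) * ((real k + 1/2) powr (-1-\<alpha>) / 12 + 10 * real k powr (-2-\<alpha>) / 384)"
  using bf_sharp[OF assms(1,2), of "real k"] assms(3) by (simp add: l2b_bf)

lemma a_low_nat:
  assumes "0 < \<alpha>" "\<alpha> < 1" "1 \<le> m"
  shows "l2a \<alpha> m \<ge> (1-\<alpha>) * (real m + 1) powr (-\<alpha>)"
  using a_low[OF assms(1,2), of "real m"] assms(3) by (simp add: l2a_def)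

lemma a_diff_nat:
  assumes "0 < \<alpha>" "\<alpha> < 1" "1 \<le> m"
  shows "l2a \<alpha> m - l2a \<alpha> (m+1) \<ge> \<alpha>*(1-\<alpha>) * (real m + 1) powr (-1-\<alpha>)"
proof -
  have "real m + 1 + 1 = real m + 2" by simp
  then show ?thesis using a_diff[OF assms(1,2), of "real m"] assms(3) unfolding l2a_def by (simp add: algebra_simps)
qed

lemma F3:
  assumes "0 < \<alpha>" "\<alpha> < 1" "2 \<le> m"
  shows "2 * l2b \<alpha> m \<le> rr \<alpha> m"
proof -
  define X where "X = \<alpha>*(1-\<alpha>)"
  have X0: "0 \<le> X" using assms by (simp add: X_def)
  have m1: "real (m - 1) = real m - 1" using assms by simp
  have bm: "l2b \<alpha> m \<le> X/8 * real m powr (-1-\<alpha>)" using b_up[OF assms(1,2)] assms by (simp add: X_def)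
  have bm1: "l2b \<alpha> (m-1) \<le> X/8 * (real m - 1) powr (-1-\<alpha>)" using b_up[OF assms(1,2), of "m-1"] assms m1 by (simp add: X_def)
  have p1: "real m powr (-1-\<alpha>) \<le> (real m - 1) powr (-1-\<alpha>)"
    using pw_anti[of "real m - 1" "real m" "1+\<alpha>"] assms by simp
  have p2: "(real m - 1) powr (-1-\<alpha>) \<le> (real m - 1) powr (-\<alpha>)"
    using powr_mono[of "-1-\<alpha>" "-\<alpha>" "real m - 1"] assms by simp
  have p3: "(real m - 1) powr (-\<alpha>) \<le> 3 powr 1 * (real m + 1) powr (-\<alpha>)"
    using pw_scale[of "real m + 1" 3 "real m - 1" \<alpha> 1] assms by simp
  have am: "l2a \<alpha> m \<ge> (1-\<alpha>) * (real m + 1) powr (-\<alpha>)" using a_low_nat[OF assms(1,2)] assms by simp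
  define P where "P = (real m + 1) powr (-\<alpha>)"
  have P0: "0 \<le> P" by (simp add: P_def)
  have "l2b \<alpha> m + l2b \<alpha> (m-1) \<le> X/4 * (real m - 1) powr (-1-\<alpha>)"
  proof -
    have "X/8 * real m powr (-1-\<alpha>) \<le> X/8 * (real m - 1) powr (-1-\<alpha>)"
      using p1 X0 by (intro mult_left_mono) auto
    then show ?thesis using bm bm1 by linarith
  qed
  also have "\<dots> \<le> X/4 * (3 * P)"
    using p2 p3 X0 unfolding P_def by (intro mult_left_mono) auto
  also have "\<dots> \<le> (1-\<alpha>) * P"
  proof -
    have "X/4 * 3 = (1-\<alpha>) * (3*\<alpha>/4)" unfolding X_def by (simp add: algebra_simps)
    also have "\<dots> \<le> (1-\<alpha>) * 1" using assms by (intro mult_left_mono) auto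
    finally have "X/4 * 3 \<le> 1-\<alpha>" by simp
    then show ?thesis using P0 by (metis mult.assoc mult_right_mono)
  qed
  finally have "l2b \<alpha> m + l2b \<alpha> (m-1) \<le> l2a \<alpha> m" using am unfolding P_def by linarith
  then show ?thesis unfolding rr_def using assms by simp
qed

lemma F2:
  assumes "0 < \<alpha>" "\<alpha> < 1" "2 \<le> m"
  shows "l2b \<alpha> (m+2) \<le> rr \<alpha> m - rr \<alpha> (m+1)"
proof -
  define X where "X = \<alpha>*(1-\<alpha>)"
  have X0: "0 \<le> X" using assms by (simp add: X_def)
  define Y where "Y = (real m + 1) powr (-1-\<alpha>)"
  have Y0: "0 \<le> Y" by (simp add: Y_def)
  have m1: "real (m - 1) = real m - 1" using assms by simp
  have bA: "l2b \<alpha> (m-1) \<le> X * ((real m - 1/2) powr (-1-\<alpha>) / 12 + 10 * (real m - 1) powr (-2-\<alpha>) / 384)"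
  proof -
    have "real m - 1 + 1/2 = real m - 1/2" by simp
    then show ?thesis using b_sharp[OF assms(1,2), of "m-1"] assms m1 by (simp add: X_def)
  qed
  have bB: "l2b \<alpha> (m+1) \<le> X * ((real m + 3/2) powr (-1-\<alpha>) / 12 + 10 * (real m + 1) powr (-2-\<alpha>) / 384)"
  proof -
    have "real m + 1 + 1/2 = real m + 3/2" by simp
    then show ?thesis using b_sharp[OF assms(1,2), of "m+1"] assms by (simp add: X_def add.commute)
  qed
  have bC: "l2b \<alpha> (m+2) \<le> X * ((real m + 5/2) powr (-1-\<alpha>) / 12 + 10 * (real m + 2) powr (-2-\<alpha>) / 384)"
  proof -
    have "real m + 2 + 1/2 = real m + 5/2" by simp
    then show ?thesis using b_sharp[OF assms(1,2), of "m+2"] assms by (simp add: X_def add.commute)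
  qed
  have q1: "(real m - 1/2) powr (-(1+\<alpha>)) \<le> 2 powr 2 * (real m + 1) powr (-(1+\<alpha>))"
    using pw_scale[of "real m + 1" 2 "real m - 1/2" "1+\<alpha>" 2] assms by simp
  have q2a: "(real m - 1) powr (-2-\<alpha>) \<le> (real m - 1) powr (-1-\<alpha>)"
    using powr_mono[of "-2-\<alpha>" "-1-\<alpha>" "real m - 1"] assms by simp
  have q2b: "(real m - 1) powr (-(1+\<alpha>)) \<le> 3 powr 2 * (real m + 1) powr (-(1+\<alpha>))"
    using pw_scale[of "real m + 1" 3 "real m - 1" "1+\<alpha>" 2] assms by simp
  have q3: "(real m + 3/2) powr (-(1+\<alpha>)) \<le> (real m + 1) powr (-(1+\<alpha>))"
    using pw_anti[of "real m + 1" "real m + 3/2" "1+\<alpha>"] assms by simp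
  have q4: "(real m + 5/2) powr (-(1+\<alpha>)) \<le> (real m + 1) powr (-(1+\<alpha>))"
    using pw_anti[of "real m + 1" "real m + 5/2" "1+\<alpha>"] assms by simp
  have q5: "(real m + 1) powr (-2-\<alpha>) \<le> (real m + 1) powr (-1-\<alpha>)"
    using powr_mono[of "-2-\<alpha>" "-1-\<alpha>" "real m + 1"] assms by simp
  have q6: "(real m + 2) powr (-2-\<alpha>) \<le> (real m + 1) powr (-2-\<alpha>)"
    using pw_anti[of "real m + 1" "real m + 2" "2+\<alpha>"] assms by simp
  have mi: "-(1+\<alpha>) = -1-\<alpha>" by simp
  have c4: "(2::real) powr 2 = 4" "(3::real) powr 2 = 9" by (simp_all add: powr_numeral)
  have inner: "((real m - 1/2) powr (-1-\<alpha>) / 12 + 10 * (real m - 1) powr (-2-\<alpha>) / 384)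
      + ((real m + 3/2) powr (-1-\<alpha>) / 12 + 10 * (real m + 1) powr (-2-\<alpha>) / 384)
      + ((real m + 5/2) powr (-1-\<alpha>) / 12 + 10 * (real m + 2) powr (-2-\<alpha>) / 384) \<le> Y"
    using q1 q2a q2b q3 q4 q5 q6 Y0 unfolding mi c4 Y_def by linarith
  have "l2b \<alpha> (m-1) + l2b \<alpha> (m+1) + l2b \<alpha> (m+2) \<le> X * Y"
  proof -
    have "l2b \<alpha> (m-1) + l2b \<alpha> (m+1) + l2b \<alpha> (m+2) \<le> X * (((real m - 1/2) powr (-1-\<alpha>) / 12 + 10 * (real m - 1) powr (-2-\<alpha>) / 384)
      + ((real m + 3/2) powr (-1-\<alpha>) / 12 + 10 * (real m + 1) powr (-2-\<alpha>) / 384)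
      + ((real m + 5/2) powr (-1-\<alpha>) / 12 + 10 * (real m + 2) powr (-2-\<alpha>) / 384))"
      using bA bB bC by (simp add: distrib_left)
    also have "\<dots> \<le> X * Y" using inner X0 by (rule mult_left_mono)
    finally show ?thesis .
  qed
  moreover have "l2a \<alpha> m - l2a \<alpha> (m+1) \<ge> X * Y"
    using a_diff_nat[OF assms(1,2)] assms unfolding X_def Y_def by simp
  moreover have "0 \<le> l2b \<alpha> m" by (rule b_nonneg[OF assms(1,2)])
  moreover have "rr \<alpha> (m+1) = l2a \<alpha> (m+1) + l2b \<alpha> (m+1) - l2b \<alpha> m" by (simp add: rr_def)
  moreover have "rr \<alpha> m = l2a \<alpha> m + l2b \<alpha> m - l2b \<alpha> (m-1)" using assms by (simp add: rr_def)
  ultimately show ?thesis by linarith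
qed

definition gC :: "real \<Rightarrow> real" where
  "gC t = t*(1-t)/2 - (2 - 2/(1+t) + 7 * exp (t * ln 2) - 3 - 4 * exp (t * ln 3))"

lemma ln3_ge1: "1 \<le> ln (3::real)"
proof -
  have "exp 1 \<le> (3::real)" using e_less_272 by simp
  then show ?thesis by (metis exp_le_cancel_iff exp_ln_iff zero_less_numeral exp_gt_zero ln_exp less_le_trans)
qed

lemma d_exp: "DERIV (\<lambda>t. exp (t * c)) t :> c * exp (t * c)"
  by (auto intro!: derivative_eq_intros)

lemma d_inv:
  assumes "1 + t \<noteq> 0"
  shows "DERIV (\<lambda>t::real. 1/(1+t)) t :> - 1/(1+t)^2"
proof -
  have "DERIV (\<lambda>t::real. 1/(1+t)) t :> (0 * (1+t) - 1 * (0 + 1)) / ((1+t) * (1+t))"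
    by (rule DERIV_divide[OF DERIV_const DERIV_add[OF DERIV_const DERIV_ident]]) (use assms in simp)
  then show ?thesis using assms by (simp add: power2_eq_square)
qed

lemma d_inv2:
  assumes "1 + t \<noteq> 0"
  shows "DERIV (\<lambda>t::real. (1/(1+t))^2) t :> - 2/(1+t)^3"
proof -
  have "DERIV (\<lambda>t::real. (1/(1+t))^2) t :> of_nat 2 * ((- 1/(1+t)^2) * (1/(1+t))^(2 - Suc 0))"
    by (rule DERIV_power[OF d_inv[OF assms]])
  moreover have "of_nat 2 * ((- 1/(1+t)^2) * (1/(1+t))^(2 - Suc 0)) = - 2/(1+t)^3"
    using assms by (simp add: field_simps power2_eq_square power3_eq_cube)
  ultimately show ?thesis by simp
qed

lemma gC_convex: "convex_on {0..1} gC"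
proof -
  define g1 where "g1 t = 1/2 - t - (2 * (1/(1+t))^2 + 7 * (ln 2 * exp (t * ln 2)) - 4 * (ln 3 * exp (t * ln 3)))" for t :: real
  define g2 where "g2 t = -1 - (2 * (- 2/(1+t)^3) + 7 * (ln 2 * (ln 2 * exp (t * ln 2))) - 4 * (ln 3 * (ln 3 * exp (t * ln 3))))" for t :: real
  show ?thesis
  proof (rule f''_ge0_imp_convex[where f' = g1 and f'' = g2])
    show "convex {0..(1::real)}" by simp
  next
    fix t :: real assume t: "t \<in> {0..1}"
    then have t1: "1 + t \<noteq> 0" by auto
    have a: "DERIV (\<lambda>t::real. t*(1-t)/2) t :> 1/2 - t"
      by (auto intro!: derivative_eq_intros simp: field_simps)
    have b: "DERIV (\<lambda>t. 2 - 2 * (1/(1+t)) + 7 * exp (t * ln 2) - 3 - 4 * exp (t * ln 3)) t :>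
        (0 - 2 * (- 1/(1+t)^2) + 7 * (ln 2 * exp (t * ln 2)) - 0 - 4 * (ln 3 * exp (t * ln 3)))"
      by (intro DERIV_diff DERIV_add DERIV_cmult d_inv[OF t1] d_exp DERIV_const)
    have "DERIV (\<lambda>t. t*(1-t)/2 - (2 - 2 * (1/(1+t)) + 7 * exp (t * ln 2) - 3 - 4 * exp (t * ln 3))) t :> g1 t"
      using DERIV_diff[OF a b] unfolding g1_def by (simp add: power_one_over)
    moreover have "(\<lambda>t. t*(1-t)/2 - (2 - 2 * (1/(1+t)) + 7 * exp (t * ln 2) - 3 - 4 * exp (t * ln 3))) = gC"
      by (rule ext) (simp add: gC_def)
    ultimately show "DERIV gC t :> g1 t" by simp
  next
    fix t :: real assume t: "t \<in> {0..1}"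
    then have t1: "1 + t \<noteq> 0" by auto
    have a: "DERIV (\<lambda>t::real. 1/2 - t) t :> 0 - 1"
      by (intro DERIV_diff DERIV_const DERIV_ident)
    have b: "DERIV (\<lambda>t. 2 * (1/(1+t))^2 + 7 * (ln 2 * exp (t * ln 2)) - 4 * (ln 3 * exp (t * ln 3))) t :>
        (2 * (- 2/(1+t)^3) + 7 * (ln 2 * (ln 2 * exp (t * ln 2))) - 4 * (ln 3 * (ln 3 * exp (t * ln 3))))"
    proof -
      have n: "DERIV (\<lambda>t::real. (1/(1+t))^2) t :> - 2/(1+t)^3"
        using d_inv2[OF t1] by simp
      show ?thesis
        by (intro DERIV_diff DERIV_add DERIV_cmult n d_exp)
    qed
    have "DERIV (\<lambda>t. 1/2 - t - (2 * (1/(1+t))^2 + 7 * (ln 2 * exp (t * ln 2)) - 4 * (ln 3 * exp (t * ln 3)))) t :> g2 t"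
      using DERIV_diff[OF a b] unfolding g2_def by simp
    moreover have "(\<lambda>t. 1/2 - t - (2 * (1/(1+t))^2 + 7 * (ln 2 * exp (t * ln 2)) - 4 * (ln 3 * exp (t * ln 3)))) = g1"
      by (rule ext) (simp add: g1_def)
    ultimately show "DERIV g1 t :> g2 t" by simp
  next
    fix t :: real assume t: "t \<in> {0..1}"
    define E2 where "E2 = exp (t * ln 2)"
    define E3 where "E3 = exp (t * ln 3)"
    have L2: "0 \<le> ln (2::real)" "ln (2::real) \<le> 25/36" using ln2_le_25_over_36 by auto
    have L3: "1 \<le> ln (3::real)" by (rule ln3_ge1)
    have E: "0 < E2" "E2 \<le> E3" "1 \<le> E3" using t unfolding E2_def E3_def
      by (auto intro!: mult_left_mono simp: ln_le_cancel_iff)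
    have c1: "(1+t)^3 \<le> 8" using t power_mono[of "1+t" 2 3] by simp
    have c2: "1/2 \<le> 4/(1+t)^3" using c1 t by (simp add: field_simps)
    have c3: "(ln 2)^2 \<le> (25/36::real)^2" using L2 by (intro power_mono) auto
    have c4: "7 * (ln 2)^2 * E2 \<le> 7 * (25/36)^2 * E3"
      using c3 E by (intro mult_mono) auto
    have c5: "4 * 1 * E3 \<le> 4 * (ln 3)^2 * E3"
      using L3 E by (intro mult_right_mono mult_left_mono) (auto simp: one_le_power)
    have g2e: "g2 t = -1 + 4/(1+t)^3 - 7 * (ln 2)^2 * E2 + 4 * (ln 3)^2 * E3"
      unfolding g2_def E2_def E3_def by (simp add: power2_eq_square)
    have k: "(4 - 7*(25/36::real)^2) * 1 \<le> (4 - 7*(25/36)^2) * E3"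
      using E by (intro mult_left_mono) (auto simp: power2_eq_square)
    have "0 \<le> -1 + 1/2 + (4 - 7 * (25/36)^2) * E3" using k by (simp add: power2_eq_square)
    then show "0 \<le> g2 t" unfolding g2e using c2 c4 c5 by (simp add: algebra_simps)
  qed
qed

lemma gC_nonpos:
  assumes "0 \<le> t" "t \<le> 1"
  shows "gC t \<le> 0"
proof -
  have g0: "gC 0 = 0" by (simp add: gC_def)
  have g1: "gC 1 = 0" by (simp add: gC_def)
  have "gC ((1 - t) *\<^sub>R 0 + t *\<^sub>R 1) \<le> (1 - t) * gC 0 + t * gC 1"
    by (rule convex_onD[OF gC_convex]) (use assms in auto)
  moreover have "(1 - t) *\<^sub>R 0 + t *\<^sub>R 1 = t" by simp
  ultimately show ?thesis unfolding g0 g1 by simp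
qed

lemma two_pow_le: assumes "0 \<le> t" "t \<le> 1" shows "2 powr t \<le> 1 + (t::real)"
proof -
  have "exp ((1 - t) *\<^sub>R 0 + t *\<^sub>R ln 2) \<le> (1 - t) * exp 0 + t * exp (ln 2)"
    by (rule convex_onD[OF exp_convex]) (use assms in auto)
  then show ?thesis by (simp add: powr_def algebra_simps)
qed

locale alf =
  fixes \<alpha> :: real
  assumes a0: "0 < \<alpha>" and a1: "\<alpha> < 1"
begin

definition X where "X = \<alpha> * (1 - \<alpha>)"

lemma X0: "0 \<le> X" "X \<le> \<alpha>" "X \<le> 1 - \<alpha>"
  using a0 a1 by (auto simp: X_def mult_left_le mult_left_le_one_le)

lemma bnn: "0 \<le> l2b \<alpha> k" using b_nonneg[OF a0 a1] .

lemma b1: "l2b \<alpha> 1 \<le> X/8" using b_up[OF a0 a1, of 1] by (simp add: X_def)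

lemma b2: "l2b \<alpha> 2 \<le> X/16"
proof -
  have "(2::real) powr (-1-\<alpha>) \<le> 2 powr (-1)" using a0 by (intro powr_mono) auto
  then have "X/8 * 2 powr (-1-\<alpha>) \<le> X/8 * (1/2)" using X0 by (intro mult_left_mono) (auto simp: powr_minus)
  then show ?thesis using b_up[OF a0 a1, of 2] by (simp add: X_def)
qed

lemma b3: "l2b \<alpha> 3 \<le> X/24"
proof -
  have "(3::real) powr (-1-\<alpha>) \<le> 3 powr (-1)" using a0 by (intro powr_mono) auto
  then have "X/8 * 3 powr (-1-\<alpha>) \<le> X/8 * (1/3)" using X0 by (intro mult_left_mono) (auto simp: powr_minus)
  then show ?thesis using b_up[OF a0 a1, of 3] by (simp add: X_def)
qed

lemma b0: "l2b \<alpha> 0 = 1/(2-\<alpha>) - 1/2" by (rule l2b_0)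

lemma aa1: "l2a \<alpha> 1 = 2 powr (1-\<alpha>) - 1" by (simp add: l2a_def)
lemma aa2: "l2a \<alpha> 2 = 3 powr (1-\<alpha>) - 2 powr (1-\<alpha>)" by (simp add: l2a_def)

lemma r0: "rr \<alpha> 0 = 1/(2-\<alpha>) + 1/2" by (simp add: rr_def l2a_0 l2b_0)
lemma r1: "rr \<alpha> 1 = l2a \<alpha> 1 + l2b \<alpha> 1 - l2b \<alpha> 0" by (simp add: rr_def)
lemma r2: "rr \<alpha> 2 = l2a \<alpha> 2 + l2b \<alpha> 2 - l2b \<alpha> 1" by (simp add: rr_def)

lemma r0_bounds: "1 \<le> rr \<alpha> 0" "rr \<alpha> 0 \<le> 3/2"
  using a0 a1 by (auto simp: r0 field_simps)

lemma two_pow_ge1: "1 \<le> (2::real) powr (1-\<alpha>)" using a1 by (intro ge_one_powr_ge_zero) auto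

lemma r01: "1 \<le> rr \<alpha> 0 + rr \<alpha> 1"
  unfolding r0 r1 b0 aa1 using two_pow_ge1 bnn[of 1] by linarith

lemma inv2: "1/2 \<le> 1/(2-\<alpha>)" "1/(2-\<alpha>) \<le> (1+\<alpha>)/2"
proof -
  show "1/2 \<le> 1/(2-\<alpha>)" using a0 a1 by (auto simp: field_simps)
  have "2 \<le> (1+\<alpha>)*(2-\<alpha>)" using a0 a1 by (simp add: algebra_simps mult_left_le)
  then show "1/(2-\<alpha>) \<le> (1+\<alpha>)/2" using a1 by (simp add: field_simps)
qed

lemma C1a: "0 \<le> rr \<alpha> 0 - rr \<alpha> 1 - l2b \<alpha> 2"
proof -
  have "2 powr (1-\<alpha>) \<le> 1 + (1-\<alpha>)" using a0 a1 by (intro two_pow_le) auto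
  then show ?thesis unfolding r0 r1 b0 aa1 using b1 b2 X0 inv2 by linarith
qed

lemma C1b: "8 * l2b \<alpha> 1 + l2b \<alpha> 2 \<le> rr \<alpha> 0 + 3 * rr \<alpha> 1"
proof -
  define u where "u = 1/(2-\<alpha>)"
  have e: "rr \<alpha> 0 = u + 1/2" "l2b \<alpha> 0 = u - 1/2" "u \<le> (1+\<alpha>)/2" using inv2 by (simp_all add: u_def r0 b0)
  show ?thesis using e r1 aa1 b1 b2 X0 two_pow_ge1 by argo
qed

lemma C1c: "4 * rr \<alpha> 2 + l2b \<alpha> 2 + 4 * l2b \<alpha> 3 \<le> rr \<alpha> 0 + 3 * rr \<alpha> 1"
proof -
  have g: "gC (1-\<alpha>) \<le> 0" using a0 a1 by (intro gC_nonpos) auto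
  have e2: "exp ((1-\<alpha>) * ln 2) = 2 powr (1-\<alpha>)" by (simp add: powr_def)
  have e3: "exp ((1-\<alpha>) * ln 3) = 3 powr (1-\<alpha>)" by (simp add: powr_def)
  have "1 + (1 - \<alpha>) = 2 - \<alpha>" by simp
  then have h: "X/2 \<le> 2 - 2 * (1/(2-\<alpha>)) + 7 * 2 powr (1-\<alpha>) - 3 - 4 * 3 powr (1-\<alpha>)"
    using g unfolding gC_def e2 e3 X_def by (simp add: algebra_simps)
  show ?thesis unfolding r0 r1 r2 b0 aa1 aa2 using h b1 b2 b3 bnn[of 1] X0
    by (simp only: ring_distribs)
qed

lemma bb2: "l2b \<alpha> 2 \<le> 1/4" using b2 X0 a1 by linarith

lemma mvt_pow:
  assumes "0 < x"
  shows "\<alpha> * (x+1) powr (-1-\<alpha>) \<le> x powr (-\<alpha>) - (x+1) powr (-\<alpha>)"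
proof -
  obtain t where t: "x < t" "t < x+1" and F: "x powr (-\<alpha>) = (\<Sum>m<1. Dp (-\<alpha>) m (x+1) / fact m * (x - (x+1))^m) + Dp (-\<alpha>) 1 t / fact 1 * (x - (x+1))^1"
    using taylor_down_pow[of x "x+1" 1 "-\<alpha>"] assms by auto
  have "x powr (-\<alpha>) - (x+1) powr (-\<alpha>) = \<alpha> * t powr (-1-\<alpha>)"
  proof -
    have "-\<alpha> - 1 = -1-\<alpha>" by simp
    then have "Dp (-\<alpha>) 1 t = -\<alpha> * t powr (-1-\<alpha>)" unfolding Dp1 by metis
    then show ?thesis unfolding F by (simp add: Dp0)
  qed
  moreover have "(x+1) powr (-1-\<alpha>) \<le> t powr (-1-\<alpha>)"
    using pw_anti[of t "x+1" "1+\<alpha>"] t assms a0 by simp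
  ultimately show ?thesis using a0 by (simp add: mult_left_mono)
qed

lemma sum_pow: "1 \<le> n \<Longrightarrow> (\<Sum>k=1..n. \<alpha> * real k powr (-1-\<alpha>)) \<le> \<alpha> + 1 - real n powr (-\<alpha>)"
proof (induction n rule: dec_induct)
  case base
  then show ?case by simp
next
  case (step n)
  have "\<alpha> * (real n + 1) powr (-1-\<alpha>) \<le> real n powr (-\<alpha>) - (real n + 1) powr (-\<alpha>)"
    using mvt_pow[of "real n"] step by simp
  then show ?case using step by (simp add: add.commute)
qed

lemma sumb: "(\<Sum>k=1..n. l2b \<alpha> k) \<le> 1/4"
proof (cases "n = 0")
  case True
  then show ?thesis by simp
next
  case False
  have "(\<Sum>k=1..n. l2b \<alpha> k) \<le> (\<Sum>k=1..n. (1-\<alpha>)/8 * (\<alpha> * real k powr (-1-\<alpha>)))"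
    using b_up[OF a0 a1] by (intro sum_mono) (simp add: algebra_simps)
  also have "\<dots> = (1-\<alpha>)/8 * (\<Sum>k=1..n. \<alpha> * real k powr (-1-\<alpha>))" by (simp add: sum_distrib_left)
  also have "\<dots> \<le> (1-\<alpha>)/8 * (\<alpha> + 1)"
  proof -
    have "0 \<le> real n powr (-\<alpha>)" by simp
    then have "(\<Sum>k=1..n. \<alpha> * real k powr (-1-\<alpha>)) \<le> \<alpha> + 1" using sum_pow[of n] False by linarith
    then show ?thesis using a1 by (intro mult_left_mono) auto
  qed
  also have "\<dots> \<le> 1/4"
  proof -
    have "(1-\<alpha>) * (\<alpha> + 1) \<le> 1 * 2" using a0 a1 by (intro mult_mono) auto
    then show ?thesis by simp
  qed
  finally show ?thesis .
qed

lemma b_le_half: "l2b \<alpha> k \<le> 1/2"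
proof (cases "k = 0")
  case True
  then show ?thesis using a0 a1 by (simp add: l2b_0 field_simps)
next
  case False
  have "(\<Sum>j=1..k. l2b \<alpha> j) \<ge> l2b \<alpha> k"
    using False bnn by (intro member_le_sum) auto
  then show ?thesis using sumb[of k] by linarith
qed

end

lemma c_decomp:
  assumes "1 \<le> j" "p \<le> j"
  shows "l2c \<alpha> j p = rr \<alpha> p + (if p = j - 1 then l2b \<alpha> j else 0) - (if p = j then 2 * l2b \<alpha> j else 0)"
proof -
  consider "j = 1" | "j = 2" | "3 \<le> j" using assms by linarith
  then show ?thesis
  proof cases
    case 1
    then have "p = 0 \<or> p = 1" using assms by auto
    then show ?thesis using 1 by (auto simp: l2c_def rr_def)
  next
    case 2
    then have "p = 0 \<or> p = 1 \<or> p = 2" using assms by auto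
    then show ?thesis using 2 by (auto simp: l2c_def rr_def)
  next
    case 3
    then have "p = 0 \<or> (1 \<le> p \<and> p \<le> j - 2) \<or> p = j - 1 \<or> p = j" using assms by auto
    moreover have "j - 1 - 1 = j - 2" by simp
    ultimately show ?thesis using 3 by (auto simp: l2c_def rr_def numeral_2_eq_2)
  qed
qed

lemma abel:
  fixes f g :: "nat \<Rightarrow> real"
  shows "(\<Sum>s=0..j. f s * (g s - g (s+1))) = f 0 * g 0 - f j * g (j+1) + (\<Sum>s=1..j. (f s - f (s-1)) * g s)"
proof (induction j)
  case 0
  then show ?case by (simp add: algebra_simps)
next
  case (Suc j)
  have "(\<Sum>s=1..Suc j. (f s - f (s-1)) * g s) = (\<Sum>s=1..j. (f s - f (s-1)) * g s) + (f (Suc j) - f j) * g (Suc j)"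
    by simp
  then show ?case using Suc by (simp add: algebra_simps)
qed

context alf
begin

definition dd where "dd = rr \<alpha> 0 - rr \<alpha> 1 - l2b \<alpha> 2"
definition th where "th = max 0 (max (2 * l2b \<alpha> 1 - rr \<alpha> 1) (rr \<alpha> 2 + l2b \<alpha> 3 - rr \<alpha> 1))"

lemma th0: "0 \<le> th" by (simp add: th_def)
lemma dd_th: "4 * th \<le> dd"
  using C1a C1b C1c unfolding th_def dd_def by (simp add: max_def)

lemma rr_nonneg: "2 \<le> m \<Longrightarrow> 0 \<le> rr \<alpha> m"
  using F3[OF a0 a1, of m] bnn[of m] by linarith

lemma rr_mono: "2 \<le> m \<Longrightarrow> rr \<alpha> (m+1) \<le> rr \<alpha> m"
  using F2[OF a0 a1, of m] bnn[of "m+2"] by linarith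

lemma delta0: "1 \<le> j \<Longrightarrow> dd \<le> l2c \<alpha> j 0 - l2c \<alpha> j 1"
proof -
  assume j: "1 \<le> j"
  consider "j = 1" | "j = 2" | "3 \<le> j" using j by linarith
  then show ?thesis
  proof cases
    case 1 then show ?thesis using c_decomp[of 1 0 \<alpha>] c_decomp[of 1 1 \<alpha>] bnn[of 1] bnn[of 2]
      by (simp add: dd_def)
  next
    case 2 then show ?thesis using c_decomp[of 2 0 \<alpha>] c_decomp[of 2 1 \<alpha>] bnn[of 2]
      by (simp add: dd_def)
  next
    case 3
    then have "1 \<noteq> j - 1" "0 \<noteq> j - 1" "1 \<noteq> j" "0 \<noteq> j" by auto
    then show ?thesis using 3 c_decomp[of j 0 \<alpha>] c_decomp[of j 1 \<alpha>] bnn[of 2]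
      by (simp add: dd_def)
  qed
qed

lemma delta1_1: "- th \<le> l2c \<alpha> 1 1"
  using c_decomp[of 1 1 \<alpha>] by (simp add: th_def)

lemma delta1: "2 \<le> j \<Longrightarrow> - th \<le> l2c \<alpha> j 1 - l2c \<alpha> j 2"
proof -
  assume j: "2 \<le> j"
  consider "j = 2" | "j = 3" | "4 \<le> j" using j by linarith
  then show ?thesis
  proof cases
    case 1 then show ?thesis using c_decomp[of 2 1 \<alpha>] c_decomp[of 2 2 \<alpha>] bnn[of 2] bnn[of 3]
      by (simp add: th_def)
  next
    case 2 then show ?thesis using c_decomp[of 3 1 \<alpha>] c_decomp[of 3 2 \<alpha>] bnn[of 3]
      by (simp add: th_def)
  next
    case 3
    then have "1 \<noteq> j - 1" "2 \<noteq> j - 1" "1 \<noteq> j" "2 \<noteq> j" by auto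
    then show ?thesis using 3 c_decomp[of j 1 \<alpha>] c_decomp[of j 2 \<alpha>] bnn[of 3]
      by (simp add: th_def)
  qed
qed

lemma tail_mono: "2 \<le> p \<Longrightarrow> p + 1 \<le> j \<Longrightarrow> l2c \<alpha> j (p+1) \<le> l2c \<alpha> j p"
proof -
  assume p: "2 \<le> p" "p + 1 \<le> j"
  have F: "l2b \<alpha> (p+2) \<le> rr \<alpha> p - rr \<alpha> (p+1)" by (rule F2[OF a0 a1 p(1)])
  consider "p + 3 \<le> j" | "p + 2 = j" | "p + 1 = j" using p by linarith
  then show ?thesis
  proof cases
    case 1 then show ?thesis using c_decomp[of j p \<alpha>] c_decomp[of j "p+1" \<alpha>] F bnn[of "p+2"] p by auto
  next
    case 2 then show ?thesis using c_decomp[of j p \<alpha>] c_decomp[of j "p+1" \<alpha>] F p by auto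
  next
    case 3 then show ?thesis using c_decomp[of j p \<alpha>] c_decomp[of j "p+1" \<alpha>] F bnn[of "p+2"] bnn[of j] p by auto
  qed
qed

lemma tail_last: "2 \<le> j \<Longrightarrow> 0 \<le> l2c \<alpha> j j"
  using c_decomp[of j j \<alpha>] F3[OF a0 a1, of j] by auto

end

context alf
begin

definition Dop :: "(nat \<Rightarrow> real) \<Rightarrow> nat \<Rightarrow> real" where
  "Dop v j = (\<Sum>s=0..j. l2c \<alpha> j (j - s) * (v (s+1) - v s))"

lemma ident:
  "Dop v j * v (j+1) = 1/2 * Dop (\<lambda>s. (v s)^2) j
     + 1/2 * (\<Sum>s=0..j. l2c \<alpha> j (j-s) * ((v (j+1) - v s)^2 - (v (j+1) - v (s+1))^2))"
proof -
  have "\<And>s. l2c \<alpha> j (j - s) * (v (s+1) - v s) * v (j+1) =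
     1/2 * (l2c \<alpha> j (j - s) * ((v (s+1))^2 - (v s)^2)) + 1/2 * (l2c \<alpha> j (j-s) * ((v (j+1) - v s)^2 - (v (j+1) - v (s+1))^2))"
    by (simp add: power2_eq_square algebra_simps)
  then show ?thesis unfolding Dop_def sum_distrib_right sum_distrib_left sum.distrib[symmetric]
    by simp
qed

lemma sq2: "((a::real) + b)^2 \<le> 2 * a^2 + 2 * b^2"
proof -
  have "2 * a^2 + 2 * b^2 - (a + b)^2 = (a - b)^2" by (simp add: power2_eq_square algebra_simps)
  then show ?thesis by (metis diff_ge_0_iff_ge zero_le_power2)
qed

lemma Qb:
  fixes v :: "nat \<Rightarrow> real"
  assumes j: "1 \<le> j"
  shows "(\<Sum>s=0..j. l2c \<alpha> j (j-s) * ((v (j+1) - v s)^2 - (v (j+1) - v (s+1))^2))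
      \<ge> dd * (v (j+1) - v j)^2 - th * (v (j+1) - v (j-1))^2"
proof -
  define T where "T s = (v (j+1) - v s)^2" for s
  define f where "f s = l2c \<alpha> j (j - s)" for s
  have T0: "\<And>s. 0 \<le> T s" by (simp add: T_def)
  have "(\<Sum>s=0..j. l2c \<alpha> j (j-s) * ((v (j+1) - v s)^2 - (v (j+1) - v (s+1))^2)) = (\<Sum>s=0..j. f s * (T s - T (s+1)))"
    by (simp add: T_def f_def)
  also have "\<dots> = f 0 * T 0 - f j * T (j+1) + (\<Sum>s=1..j. (f s - f (s-1)) * T s)" by (rule abel)
  also have "\<dots> = l2c \<alpha> j j * T 0 + (\<Sum>s=1..j. (l2c \<alpha> j (j-s) - l2c \<alpha> j (j-s+1)) * T s)"
  proof -
    have "T (j+1) = 0" by (simp add: T_def)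
    moreover have "\<And>s. s \<in> {1..j} \<Longrightarrow> f s - f (s-1) = l2c \<alpha> j (j-s) - l2c \<alpha> j (j-s+1)"
      unfolding f_def by (auto simp: Suc_diff_le)
    ultimately show ?thesis by (simp add: f_def)
  qed
  finally have eq: "(\<Sum>s=0..j. l2c \<alpha> j (j-s) * ((v (j+1) - v s)^2 - (v (j+1) - v (s+1))^2)) =
      l2c \<alpha> j j * T 0 + (\<Sum>s=1..j. (l2c \<alpha> j (j-s) - l2c \<alpha> j (j-s+1)) * T s)" .
  consider "j = 1" | "2 \<le> j" using j by linarith
  then show ?thesis
  proof cases
    case 1
    have "l2c \<alpha> 1 1 * T 0 \<ge> - th * T 0" using delta1_1 T0[of 0] by (intro mult_right_mono) auto
    moreover have "(l2c \<alpha> 1 0 - l2c \<alpha> 1 1) * T 1 \<ge> dd * T 1" using delta0[of 1] T0[of 1] by (intro mult_right_mono) auto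
    ultimately show ?thesis unfolding eq using 1 by (simp add: T_def)
  next
    case 2
    then obtain k where k: "j = Suc (Suc k)" by (metis add_2_eq_Suc le_Suc_ex)
    have split: "(\<Sum>s=1..j. (l2c \<alpha> j (j-s) - l2c \<alpha> j (j-s+1)) * T s) =
        (\<Sum>s=1..k. (l2c \<alpha> j (j-s) - l2c \<alpha> j (j-s+1)) * T s)
        + (l2c \<alpha> j 1 - l2c \<alpha> j 2) * T (j-1) + (l2c \<alpha> j 0 - l2c \<alpha> j 1) * T j"
      unfolding k by (simp add: numeral_2_eq_2)
    have tail: "0 \<le> (\<Sum>s=1..k. (l2c \<alpha> j (j-s) - l2c \<alpha> j (j-s+1)) * T s)"
    proof (intro sum_nonneg)
      fix s assume s: "s \<in> {1..k}"
      have "l2c \<alpha> j (j-s+1) \<le> l2c \<alpha> j (j-s)"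
        using tail_mono[of "j-s" j] s k by auto
      then show "0 \<le> (l2c \<alpha> j (j-s) - l2c \<alpha> j (j-s+1)) * T s" using T0[of s] by simp
    qed
    have t1: "(l2c \<alpha> j 1 - l2c \<alpha> j 2) * T (j-1) \<ge> - th * T (j-1)"
      using delta1[OF 2] T0 by (intro mult_right_mono) auto
    have t2: "(l2c \<alpha> j 0 - l2c \<alpha> j 1) * T j \<ge> dd * T j"
      using delta0[of j] j T0 by (intro mult_right_mono) auto
    have t0: "0 \<le> l2c \<alpha> j j * T 0" using tail_last[OF 2] T0 by simp
    show ?thesis unfolding eq split using tail t1 t2 t0 by (simp add: T_def)
  qed
qed

lemma stepC:
  fixes M :: nat and v :: "nat \<Rightarrow> real"
  assumes "2 \<le> M"
  shows "(\<Sum>j=1..M-1. dd * (v (j+1) - v j)^2 - th * (v (j+1) - v (j-1))^2)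
     \<ge> (dd - 2*th) * (v M - v (M-1))^2 - 2*th * (v 1 - v 0)^2"
  using assms
proof (induction M rule: dec_induct)
  case base
  have "th * (v 2 - v 0)^2 \<le> th * (2 * (v 2 - v 1)^2 + 2 * (v 1 - v 0)^2)"
    using sq2[of "v 2 - v 1" "v 1 - v 0"] th0 by (intro mult_left_mono) auto
  moreover have "(\<Sum>j=1..2-1. dd * (v (j+1) - v j)^2 - th * (v (j+1) - v (j-1))^2) = dd * (v 2 - v 1)^2 - th * (v 2 - v 0)^2"
    by (simp add: numeral_2_eq_2)
  ultimately show ?case by (simp add: algebra_simps)
next
  case (step M)
  have "th * (v (M+1) - v (M-1))^2 \<le> th * (2 * (v (M+1) - v M)^2 + 2 * (v M - v (M-1))^2)"
    using sq2[of "v (M+1) - v M" "v M - v (M-1)"] th0 by (intro mult_left_mono) auto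
  moreover have "(\<Sum>j=1..Suc M - 1. dd * (v (j+1) - v j)^2 - th * (v (j+1) - v (j-1))^2)
      = (\<Sum>j=1..M-1. dd * (v (j+1) - v j)^2 - th * (v (j+1) - v (j-1))^2) + (dd * (v (M+1) - v M)^2 - th * (v (M+1) - v (M-1))^2)"
    using step(1) by (cases M) auto
  moreover have "0 \<le> (dd - 4*th) * (v M - v (M-1))^2" using dd_th by simp
  ultimately show ?case using step(3) by (simp add: algebra_simps)
qed

end

lemma Rsum:
  fixes r w :: "nat \<Rightarrow> real"
  shows "(\<Sum>j=0..M. \<Sum>s=0..j. r (j-s) * (w (s+1) - w s)) =
     r 0 * w (M+1) + (\<Sum>s=1..M. r (M+1-s) * w s) - (\<Sum>p=0..M. r p) * w 0"
proof (induction M)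
  case 0
  then show ?case by (simp add: algebra_simps)
next
  case (Suc M)
  define g where "g s = r (M+2-s) * w s" for s
  have A: "(\<Sum>s=0..Suc M. r (Suc M - s) * w (s+1)) = (\<Sum>s=1..Suc M. r (M+2-s) * w s) + r 0 * w (M+2)"
  proof -
    have "(\<Sum>s=0..Suc M. r (Suc M - s) * w (s+1)) = (\<Sum>s=0..Suc M. g (Suc s))"
      by (intro sum.cong) (auto simp: g_def)
    also have "\<dots> = (\<Sum>s=Suc 0..Suc (Suc M). g s)" by (rule sum.shift_bounds_cl_Suc_ivl[symmetric])
    also have "\<dots> = (\<Sum>s=1..Suc M. g s) + g (M+2)" by simp
    finally show ?thesis by (simp add: g_def)
  qed
  have B: "(\<Sum>s=0..Suc M. r (Suc M - s) * w s) = r (Suc M) * w 0 + (\<Sum>s=1..M. r (Suc M - s) * w s) + r 0 * w (Suc M)"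
  proof -
    have "(\<Sum>s=0..Suc M. r (Suc M - s) * w s) = r (Suc M) * w 0 + (\<Sum>s=Suc 0..Suc M. r (Suc M - s) * w s)"
      by (subst sum.atLeast_Suc_atMost) auto
    also have "(\<Sum>s=Suc 0..Suc M. r (Suc M - s) * w s) = (\<Sum>s=1..M. r (Suc M - s) * w s) + r 0 * w (Suc M)"
      by simp
    finally show ?thesis by simp
  qed
  have C: "(\<Sum>s=0..Suc M. r (Suc M - s) * (w (s+1) - w s)) = (\<Sum>s=0..Suc M. r (Suc M - s) * w (s+1)) - (\<Sum>s=0..Suc M. r (Suc M - s) * w s)"
    by (simp add: algebra_simps sum_subtractf)
  have "(\<Sum>j=0..Suc M. \<Sum>s=0..j. r (j-s) * (w (s+1) - w s)) = (\<Sum>j=0..M. \<Sum>s=0..j. r (j-s) * (w (s+1) - w s)) + (\<Sum>s=0..Suc M. r (Suc M - s) * (w (s+1) - w s))"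
    by simp
  also have "\<dots> = r 0 * w (M+2) + (\<Sum>s=1..Suc M. r (M+2-s) * w s) - (\<Sum>p=0..Suc M. r p) * w 0"
    unfolding Suc C A B by (simp add: algebra_simps)
  finally show ?case by simp
qed

context alf
begin

lemma rr_sum: "(\<Sum>p=0..n. rr \<alpha> p) = (\<Sum>p<n+1. l2a \<alpha> p) + l2b \<alpha> n"
  by (induction n) (auto simp: rr_def)

lemma Dop_decomp:
  assumes j: "1 \<le> j"
  shows "Dop w j = (\<Sum>s=0..j. rr \<alpha> (j-s) * (w (s+1) - w s)) + l2b \<alpha> j * (w 2 - w 1) - 2 * l2b \<alpha> j * (w 1 - w 0)"
proof -
  have "Dop w j = (\<Sum>s=0..j. rr \<alpha> (j-s) * (w (s+1) - w s) + (if s = 1 then l2b \<alpha> j * (w (s+1) - w s) else 0)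
      - (if s = 0 then 2 * l2b \<alpha> j * (w (s+1) - w s) else 0))"
    unfolding Dop_def
  proof (intro sum.cong refl)
    fix s assume s: "s \<in> {0..j}"
    have e1: "(j - s = j - 1) = (s = 1)" using s j by auto
    have e2: "(j - s = j) = (s = 0)" using s j by auto
    show "l2c \<alpha> j (j - s) * (w (s + 1) - w s) = rr \<alpha> (j - s) * (w (s + 1) - w s) + (if s = 1 then l2b \<alpha> j * (w (s + 1) - w s) else 0) -
          (if s = 0 then 2 * l2b \<alpha> j * (w (s + 1) - w s) else 0)"
    proof -
      have c: "l2c \<alpha> j (j-s) = rr \<alpha> (j-s) + (if s = 1 then l2b \<alpha> j else 0) - (if s = 0 then 2*l2b \<alpha> j else 0)"
        using c_decomp[of j "j-s" \<alpha>] j s unfolding e1 e2 by simp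
      show ?thesis unfolding c by (simp add: algebra_simps)
    qed
  qed
  also have "\<dots> = (\<Sum>s=0..j. rr \<alpha> (j-s) * (w (s+1) - w s)) + (\<Sum>s=0..j. (if s = 1 then l2b \<alpha> j * (w (s+1) - w s) else 0))
      - (\<Sum>s=0..j. (if s = 0 then 2 * l2b \<alpha> j * (w (s+1) - w s) else 0))"
    by (simp add: sum.distrib sum_subtractf)
  also have "\<dots> = (\<Sum>s=0..j. rr \<alpha> (j-s) * (w (s+1) - w s)) + l2b \<alpha> j * (w 2 - w 1) - 2 * l2b \<alpha> j * (w 1 - w 0)"
    using j by (simp add: sum.delta numeral_2_eq_2)
  finally show ?thesis .
qed

end

context alf
begin

lemma Dsum:
  fixes w :: "nat \<Rightarrow> real"
  assumes M: "2 \<le> M" and w: "\<And>s. 0 \<le> w s"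
  shows "(\<Sum>j=1..M-1. Dop w j) \<ge> rr \<alpha> 0 * w M + rr \<alpha> 1 * w (M-1) - 3 * real M powr (1-\<alpha>) * (w 0 + w 1)"
proof -
  obtain k where k: "M = k + 2" using M by (metis add.commute le_Suc_ex)
  define R where "R j = (\<Sum>s=0..j. rr \<alpha> (j-s) * (w (s+1) - w s))" for j
  define Bs where "Bs = (\<Sum>j=1..k+1. l2b \<alpha> j)"
  have Mk: "M - 1 = k + 1" using k by simp
  have s1: "(\<Sum>j=1..M-1. Dop w j) = (\<Sum>j=1..k+1. R j) + Bs * (w 2 - w 1) - 2 * Bs * (w 1 - w 0)"
  proof -
    have "(\<Sum>j=1..M-1. Dop w j) = (\<Sum>j=1..k+1. R j + l2b \<alpha> j * (w 2 - w 1) - 2 * l2b \<alpha> j * (w 1 - w 0))"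
      unfolding Mk R_def by (intro sum.cong refl Dop_decomp) auto
    also have "\<dots> = (\<Sum>j=1..k+1. R j) + (\<Sum>j=1..k+1. l2b \<alpha> j * (w 2 - w 1)) - (\<Sum>j=1..k+1. 2 * l2b \<alpha> j * (w 1 - w 0))"
      by (simp only: sum.distrib sum_subtractf)
    also have "(\<Sum>j=1..k+1. l2b \<alpha> j * (w 2 - w 1)) = Bs * (w 2 - w 1)"
      unfolding Bs_def by (rule sum_distrib_right[symmetric])
    also have "(\<Sum>j=1..k+1. 2 * l2b \<alpha> j * (w 1 - w 0)) = 2 * Bs * (w 1 - w 0)"
    proof -
      have "(\<Sum>j=1..k+1. 2 * l2b \<alpha> j * (w 1 - w 0)) = (\<Sum>j=1..k+1. l2b \<alpha> j) * (2 * (w 1 - w 0))"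
        by (subst sum_distrib_right) (simp add: algebra_simps)
      then show ?thesis unfolding Bs_def by (metis mult.assoc mult.commute)
    qed
    finally show ?thesis .
  qed
  have s2: "(\<Sum>j=0..k+1. R j) = R 0 + (\<Sum>j=1..k+1. R j)"
    by (subst sum.atLeast_Suc_atMost) auto
  have R0: "R 0 = rr \<alpha> 0 * (w 1 - w 0)" by (simp add: R_def)
  have s3: "(\<Sum>j=0..k+1. R j) = rr \<alpha> 0 * w (k+2) + (\<Sum>s=1..k+1. rr \<alpha> (k+2-s) * w s) - (\<Sum>p=0..k+1. rr \<alpha> p) * w 0"
    unfolding R_def using Rsum[of "rr \<alpha>" w "k+1"] by (simp add: add.assoc)
  have s4: "(\<Sum>s=1..k+1. rr \<alpha> (k+2-s) * w s) \<ge> rr \<alpha> 1 * w (k+1)"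
  proof -
    have "(\<Sum>s=1..k+1. rr \<alpha> (k+2-s) * w s) = (\<Sum>s=1..k. rr \<alpha> (k+2-s) * w s) + rr \<alpha> 1 * w (k+1)"
      by simp
    moreover have "0 \<le> (\<Sum>s=1..k. rr \<alpha> (k+2-s) * w s)"
      using w by (intro sum_nonneg mult_nonneg_nonneg rr_nonneg) auto
    ultimately show ?thesis by simp
  qed
  have s5: "(\<Sum>p=0..k+1. rr \<alpha> p) \<le> real M powr (1-\<alpha>) + 1/2"
  proof -
    have "(\<Sum>p=0..k+1. rr \<alpha> p) = real (k+2) powr (1-\<alpha>) + l2b \<alpha> (k+1)"
      using rr_sum[of "k+1"] l2a_sum[of \<alpha> "k+2"] by simp
    then show ?thesis using b_le_half[of "k+1"] k by simp
  qed
  have Bs: "0 \<le> Bs" "Bs \<le> 1/4"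
  proof -
    show "0 \<le> Bs" unfolding Bs_def by (rule sum_nonneg) (rule bnn)
    show "Bs \<le> 1/4" unfolding Bs_def by (rule sumb)
  qed
  define P where "P = real M powr (1-\<alpha>)"
  have P1: "1 \<le> P" unfolding P_def using M a1 by (intro ge_one_powr_ge_zero) auto
  have f1: "Bs * w 1 \<le> 1/4 * w 1" using Bs w by (intro mult_right_mono) auto
  have f2: "rr \<alpha> 0 * w 1 \<le> 3/2 * w 1" using r0_bounds w by (intro mult_right_mono) auto
  have f3: "w 0 \<le> P * w 0" "w 1 \<le> P * w 1"
    using mult_right_mono[OF P1 w[of 0]] mult_right_mono[OF P1 w[of 1]] by simp_all
  have f4: "0 \<le> Bs * w 2" "0 \<le> Bs * w 0" "0 \<le> rr \<alpha> 0 * w 0" using Bs w r0_bounds by simp_all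
  have f5: "(\<Sum>p=0..k+1. rr \<alpha> p) * w 0 \<le> (P + 1/2) * w 0" using s5 w unfolding P_def by (intro mult_right_mono) auto
  define S where "S = (\<Sum>s=1..k+1. rr \<alpha> (k+2-s) * w s)"
  define Rs where "Rs = (\<Sum>p=0..k+1. rr \<alpha> p)"
  have eq: "(\<Sum>j=1..M-1. Dop w j) = rr \<alpha> 0 * w (k+2) + S - Rs * w 0 - rr \<alpha> 0 * w 1 + rr \<alpha> 0 * w 0
      + Bs * w 2 - Bs * w 1 - 2 * (Bs * w 1) + 2 * (Bs * w 0)"
    using s1 s2 s3 R0 unfolding S_def Rs_def by (simp add: algebra_simps)
  have e2: "3 * P * (w 0 + w 1) = 3 * (P * w 0) + 3 * (P * w 1)" by (simp add: algebra_simps)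
  have e3: "(P + 1/2) * w 0 = P * w 0 + w 0 / 2" by (simp add: algebra_simps)
  have wM: "w M = w (k+2)" "w (M-1) = w (k+1)" using k by auto
  have w01: "0 \<le> w 0" "0 \<le> w 1" using w by auto
  show ?thesis unfolding P_def[symmetric] e2 wM eq
    using s4 f1 f2 f3 f4 f5 w01 unfolding S_def[symmetric] Rs_def[symmetric] e3 by linarith
qed

end

context alf
begin

lemma rr1_low: "-1/2 \<le> rr \<alpha> 1"
  using l2a_nonneg[OF a0 a1, of 1] bnn[of 1] b_le_half[of 0] by (simp add: rr_def)

lemma dd_le: "dd \<le> 2" using r0_bounds rr1_low bnn[of 2] by (simp add: dd_def)

lemma th_le: "th \<le> 1/2" using dd_th dd_le by linarith

lemma endpsd: "0 \<le> rr \<alpha> 0 * a^2 + rr \<alpha> 1 * b^2 + (dd - 2*th) * (a - b)^2"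
proof -
  define r0 where "r0 = rr \<alpha> 0"
  define r1 where "r1 = rr \<alpha> 1"
  define E where "E = dd - 2*th"
  define b2 where "b2 = l2b \<alpha> 2"
  have E2: "dd/2 \<le> E" using dd_th by (simp add: E_def)
  have dd: "dd = r0 - r1 - b2" by (simp add: dd_def r0_def r1_def b2_def)
  have R0: "1 \<le> r0" "r0 \<le> 3/2" using r0_bounds by (auto simp: r0_def)
  have S: "1 \<le> r0 + r1" using r01 by (simp add: r0_def r1_def)
  have B2: "0 \<le> b2" "b2 \<le> 1/4" using bnn[of 2] bb2 by (auto simp: b2_def)
  have E0: "0 \<le> E" using E2 dd_th th0 by linarith
  show ?thesis unfolding r0_def[symmetric] r1_def[symmetric] E_def[symmetric]
  proof (cases "0 \<le> r1")
    case True
    then show "0 \<le> r0 * a^2 + r1 * b^2 + E * (a - b)^2" using R0 E0 by simp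
  next
    case False
    define t where "t = - r1"
    have t: "0 < t" "t \<le> r0 - 1" using False S by (auto simp: t_def)
    have P: "0 < r1 + E" using E2 dd S B2 by linarith
    define f where "f = (r0 + t - b2) * (r0 - t) - 2 * r0 * t"
    have fid: "f = (1 - 2 * (r0 - 1)^2 - b2) + ((r0 - 1) - t) * ((r0 - 1) + t - b2 + 2 * r0)"
      unfolding f_def by (simp add: power2_eq_square algebra_simps)
    have q1: "(r0 - 1)^2 \<le> 1/4"
    proof -
      have "(r0 - 1)^2 \<le> (1/2)^2" using R0 by (intro power_mono) auto
      then show ?thesis by (simp add: power2_eq_square)
    qed
    have q2: "0 \<le> ((r0 - 1) - t) * ((r0 - 1) + t - b2 + 2 * r0)"
      using t R0 B2 by (intro mult_nonneg_nonneg) auto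
    have f0: "0 \<le> f" using fid q1 q2 B2 by linarith
    have "0 \<le> r0 * r1 + dd/2 * (r0 + r1)"
    proof -
      have "r0 * r1 + dd/2 * (r0 + r1) = f / 2" unfolding f_def dd t_def by (simp add: field_simps)
      then show ?thesis using f0 by simp
    qed
    moreover have "dd/2 * (r0 + r1) \<le> E * (r0 + r1)" using E2 S by (intro mult_right_mono) auto
    ultimately have "0 \<le> r0 * r1 + E * (r0 + r1)" by linarith
    then have D: "0 \<le> (r0 + E) * (r1 + E) - E^2" by (simp add: power2_eq_square algebra_simps)
    have "(r1 + E) * (r0 * a^2 + r1 * b^2 + E * (a - b)^2) = ((r1 + E) * b - E * a)^2 + ((r0 + E) * (r1 + E) - E^2) * a^2"
      by (simp add: power2_eq_square algebra_simps)
    also have "\<dots> \<ge> 0" using D by simp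
    finally show "0 \<le> r0 * a^2 + r1 * b^2 + E * (a - b)^2" using P by (simp add: zero_le_mult_iff)
  qed
qed

theorem time_pos:
  fixes v :: "nat \<Rightarrow> real"
  assumes M: "2 \<le> M"
  shows "(\<Sum>j=1..M-1. Dop v j * v (j+1)) \<ge> - 3 * real M powr (1-\<alpha>) * ((v 0)^2 + (v 1)^2)"
proof -
  define w where "w s = (v s)^2" for s
  define Q where "Q j = (\<Sum>s=0..j. l2c \<alpha> j (j-s) * ((v (j+1) - v s)^2 - (v (j+1) - v (s+1))^2))" for j
  define P where "P = real M powr (1-\<alpha>)"
  have P1: "1 \<le> P" unfolding P_def using M a1 by (intro ge_one_powr_ge_zero) auto
  define A where "A = (v M - v (M-1))^2"
  define Y where "Y = (v 1 - v 0)^2"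
  define W where "W = (v 0)^2 + (v 1)^2"
  have F1: "(\<Sum>j=1..M-1. Dop v j * v (j+1)) = 1/2 * (\<Sum>j=1..M-1. Dop w j) + 1/2 * (\<Sum>j=1..M-1. Q j)"
    unfolding w_def Q_def ident by (simp add: sum.distrib sum_distrib_left)
  have F2: "(\<Sum>j=1..M-1. Q j) \<ge> (dd - 2*th) * A - 2 * (th * Y)"
  proof -
    have "(\<Sum>j=1..M-1. Q j) \<ge> (\<Sum>j=1..M-1. dd * (v (j+1) - v j)^2 - th * (v (j+1) - v (j-1))^2)"
      unfolding Q_def by (intro sum_mono Qb) auto
    then show ?thesis using stepC[OF M, of v] unfolding A_def Y_def by linarith
  qed
  have F3: "(\<Sum>j=1..M-1. Dop w j) \<ge> rr \<alpha> 0 * (v M)^2 + rr \<alpha> 1 * (v (M-1))^2 - 3 * (P * W)"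
    using Dsum[OF M, of w] unfolding P_def W_def w_def by (simp add: mult.assoc)
  have F4: "0 \<le> rr \<alpha> 0 * (v M)^2 + rr \<alpha> 1 * (v (M-1))^2 + (dd - 2*th) * A"
    unfolding A_def by (rule endpsd)
  have F5: "th * Y \<le> W"
  proof -
    have "(v 1 - v 0)^2 \<le> 2 * (v 1)^2 + 2 * (v 0)^2" using sq2[of "v 1" "- v 0"] by simp
    then have "th * Y \<le> 1/2 * (2 * (v 1)^2 + 2 * (v 0)^2)" unfolding Y_def using th_le th0 by (intro mult_mono) auto
    then show ?thesis unfolding W_def by simp
  qed
  have W0: "0 \<le> W" unfolding W_def by simp
  have F6: "W \<le> P * W" using mult_right_mono[OF P1 W0] by simp
  have G: "- 3 * real M powr (1-\<alpha>) * ((v 0)^2 + (v 1)^2) = -3 * (P * W)" unfolding P_def W_def by simp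
  show ?thesis unfolding G using F1 F2 F3 F4 F5 F6 W0 by linarith
qed

end

lemma green:
  fixes Y :: "nat \<Rightarrow> real"
  shows "(\<Sum>i=1..n. ((Y (i+1) - Y i) - (Y i - Y (i-1))) * Y i)
     = (Y (n+1) - Y n) * Y n - (Y 1 - Y 0) * Y 0 - (\<Sum>i=1..n. (Y i - Y (i-1))^2)"
proof (induction n)
  case 0
  then show ?case by simp
next
  case (Suc n)
  then show ?case by (simp add: power2_eq_square algebra_simps)
qed

lemma sq2': "((a::real) - b)^2 \<le> 2 * a^2 + 2 * b^2"
proof -
  have "2 * a^2 + 2 * b^2 - (a - b)^2 = (a + b)^2" by (simp add: power2_eq_square algebra_simps)
  then show ?thesis by (metis diff_ge_0_iff_ge zero_le_power2)
qed

lemma dd_sum: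
  fixes d :: "nat \<Rightarrow> real"
  assumes "1 \<le> N"
  shows "(\<Sum>i=1..N-1. (d (i+1) - d i)^2) \<le> 4 * (\<Sum>i=1..N. (d i)^2)"
proof -
  have "(\<Sum>i=1..N-1. (d (i+1) - d i)^2) \<le> (\<Sum>i=1..N-1. 2 * (d (i+1))^2 + 2 * (d i)^2)"
    by (intro sum_mono sq2')
  also have "\<dots> = 2 * (\<Sum>i=1..N-1. (d (i+1))^2) + 2 * (\<Sum>i=1..N-1. (d i)^2)"
    by (simp add: sum.distrib sum_distrib_left)
  also have "(\<Sum>i=1..N-1. (d (i+1))^2) = (\<Sum>i=2..N. (d i)^2)"
  proof -
    have "(\<Sum>i=1..N-1. (d (i+1))^2) = (\<Sum>i=Suc 1..Suc (N-1). (d i)^2)"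
      by (subst sum.shift_bounds_cl_Suc_ivl) simp
    then show ?thesis using assms by (simp add: numeral_2_eq_2)
  qed
  also have "(\<Sum>i=2..N. (d i)^2) \<le> (\<Sum>i=1..N. (d i)^2)"
    by (intro sum_mono2) auto
  also have "(\<Sum>i=1..N-1. (d i)^2) \<le> (\<Sum>i=1..N. (d i)^2)"
    by (intro sum_mono2) auto
  finally show ?thesis by simp
qed

lemma space1:
  fixes y :: "nat \<Rightarrow> nat \<Rightarrow> real"
  assumes h: "0 < h" and N: "2 \<le> N" and b0: "y 0 t = 0" and bN: "y N t = 0"
  shows "(\<Sum>i=1..N-1. dxx h y i t * Hh h y i t * h) \<le> -(2/3) * nrm0bsq h N (dxb h y) t"
proof -
  define Y where "Y i = y i t" for i
  define d where "d i = Y i - Y (i-1)" for i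
  define S where "S = (\<Sum>i=1..N. (d i)^2)"
  have nb: "nrm0bsq h N (dxb h y) t = S / h"
    unfolding nrm0bsq_def dxb_def S_def d_def Y_def using h
    by (simp add: power_divide sum_divide_distrib power2_eq_square)
  have trm: "\<And>i. 1 \<le> i \<Longrightarrow> dxx h y i t * Hh h y i t * h = (1/h) * ((d (i+1) - d i) * Y i) + (1/(12*h)) * (d (i+1) - d i)^2"
  proof -
    fix i :: nat assume i: "1 \<le> i"
    have dx: "dxx h y i t = (d (i+1) - d i) / h^2" unfolding dxx_def d_def Y_def by (simp add: algebra_simps)
    show "dxx h y i t * Hh h y i t * h = (1/h) * ((d (i+1) - d i) * Y i) + (1/(12*h)) * (d (i+1) - d i)^2"
    proof -
      have hh: "Hh h y i t = Y i + (d (i+1) - d i) / 12"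
        unfolding Hh_def dx using h by (simp add: Y_def)
      define D where "D = d (i+1) - d i"
      have "D / h^2 * (Y i + D / 12) * h = (1/h) * (D * Y i) + (1/(12*h)) * D^2"
        using h by (simp add: field_simps power2_eq_square)
      then show ?thesis unfolding hh dx D_def .
    qed
  qed
  have "(\<Sum>i=1..N-1. dxx h y i t * Hh h y i t * h) = (1/h) * (\<Sum>i=1..N-1. (d (i+1) - d i) * Y i) + (1/(12*h)) * (\<Sum>i=1..N-1. (d (i+1) - d i)^2)"
    by (simp add: trm sum.distrib sum_distrib_left)
  also have "(\<Sum>i=1..N-1. (d (i+1) - d i) * Y i) = - S"
  proof -
    have "(\<Sum>i=1..N-1. (d (i+1) - d i) * Y i) = (Y (N-1+1) - Y (N-1)) * Y (N-1) - (Y 1 - Y 0) * Y 0 - (\<Sum>i=1..N-1. (Y i - Y (i-1))^2)"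
      unfolding d_def using green[of Y "N-1"] by (simp add: algebra_simps)
    also have "\<dots> = - (\<Sum>i=1..N. (d i)^2)"
    proof -
      have "Y (N-1+1) = 0" "Y 0 = 0" using N b0 bN by (auto simp: Y_def)
      moreover have "(\<Sum>i=1..N. (d i)^2) = (\<Sum>i=1..N-1. (d i)^2) + (d N)^2"
      proof -
        obtain m where m: "N = Suc m" using N by (cases N) auto
        then show ?thesis by simp
      qed
      moreover have "d N = - Y (N-1)" using bN by (simp add: d_def Y_def)
      ultimately show ?thesis by (simp add: d_def power2_eq_square)
    qed
    finally show ?thesis unfolding S_def .
  qed
  finally have E: "(\<Sum>i=1..N-1. dxx h y i t * Hh h y i t * h) = (1/h) * (-S) + (1/(12*h)) * (\<Sum>i=1..N-1. (d (i+1) - d i)^2)" .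
  have "(\<Sum>i=1..N-1. (d (i+1) - d i)^2) \<le> 4 * S"
    unfolding S_def using N by (intro dd_sum) auto
  then have "(1/(12*h)) * (\<Sum>i=1..N-1. (d (i+1) - d i)^2) \<le> (1/(12*h)) * (4 * S)"
    using h by (intro mult_left_mono) auto
  then have "(\<Sum>i=1..N-1. dxx h y i t * Hh h y i t * h) \<le> (1/h) * (-S) + (1/(12*h)) * (4 * S)"
    unfolding E by linarith
  also have "\<dots> = -(2/3) * (S / h)" using h by (simp add: field_simps)
  finally show ?thesis unfolding nb .
qed

lemma hh_sq: "((a::real) + 10 * b + c)^2 \<le> 12 * (a^2 + 10 * b^2 + c^2)"
proof -
  have "12 * (a^2 + 10 * b^2 + c^2) - (a + 10 * b + c)^2 = 10 * (a - b)^2 + 10 * (b - c)^2 + (a - c)^2"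
    by (simp add: power2_eq_square algebra_simps)
  moreover have "0 \<le> 10 * (a - b)^2 + 10 * (b - c)^2 + (a - c)^2" by simp
  ultimately show ?thesis by linarith
qed

lemma hh_sq2: "((a + 10 * b + c) / 12)^2 \<le> ((a::real)^2 + 10 * b^2 + c^2) / 12"
proof -
  have "((a + 10 * b + c) / 12)^2 = (a + 10 * b + c)^2 / 144" by (simp add: power_divide)
  then show ?thesis using hh_sq[of a b c] by linarith
qed

lemma telesc: "(Y::nat\<Rightarrow>real) 0 = 0 \<Longrightarrow> Y i = (\<Sum>k=1..i. Y k - Y (k-1))"
  by (induction i) auto

lemma space2:
  fixes y :: "nat \<Rightarrow> nat \<Rightarrow> real"
  assumes h: "0 < h" and N: "2 \<le> N" and b0: "y 0 t = 0" and bN: "y N t = 0"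
  shows "nrm0sq h N (Hh h y) t \<le> (real N * h)^2 * nrm0bsq h N (dxb h y) t"
proof -
  define Y where "Y i = y i t" for i
  define d where "d i = Y i - Y (i-1)" for i
  define S where "S = (\<Sum>i=1..N. (d i)^2)"
  define SY where "SY = (\<Sum>i=1..N-1. (Y i)^2)"
  have Y0: "Y 0 = 0" "Y N = 0" using b0 bN by (auto simp: Y_def)
  have nb: "nrm0bsq h N (dxb h y) t = S / h"
    unfolding nrm0bsq_def dxb_def S_def d_def Y_def using h
    by (simp add: power_divide sum_divide_distrib power2_eq_square)
  have hh: "\<And>i. Hh h y i t = (Y (i+1) + 10 * Y i + Y (i-1)) / 12"
    unfolding Hh_def dxx_def Y_def using h by (simp add: field_simps)
  have A: "(\<Sum>i=1..N-1. (Hh h y i t)^2) \<le> SY"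
  proof -
    have "(\<Sum>i=1..N-1. (Hh h y i t)^2) \<le> (\<Sum>i=1..N-1. ((Y (i+1))^2 + 10 * (Y i)^2 + (Y (i-1))^2) / 12)"
      unfolding hh by (intro sum_mono hh_sq2)
    also have "\<dots> = ((\<Sum>i=1..N-1. (Y (i+1))^2) + 10 * SY + (\<Sum>i=1..N-1. (Y (i-1))^2)) / 12"
      unfolding SY_def by (simp only: sum_divide_distrib[symmetric] sum.distrib sum_distrib_left)
    also have "(\<Sum>i=1..N-1. (Y (i+1))^2) \<le> SY"
    proof -
      obtain m where m: "N = Suc (Suc m)" using N by (metis add_2_eq_Suc le_Suc_ex)
      have "(\<Sum>i=1..N-1. (Y (i+1))^2) = (\<Sum>i=Suc 1..Suc (N-1). (Y i)^2)"
        by (subst sum.shift_bounds_cl_Suc_ivl) simp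
      also have "\<dots> = (\<Sum>i=2..m+1. (Y i)^2) + (Y N)^2" using m by (simp add: numeral_2_eq_2)
      also have "\<dots> = (\<Sum>i=2..m+1. (Y i)^2)" using Y0 by simp
      also have "\<dots> \<le> SY" unfolding SY_def m by (intro sum_mono2) auto
      finally show ?thesis .
    qed
    also have "(\<Sum>i=1..N-1. (Y (i-1))^2) \<le> SY"
    proof -
      obtain m where m: "N = Suc (Suc m)" using N by (metis add_2_eq_Suc le_Suc_ex)
      have "(\<Sum>i=Suc 0..Suc m. (Y (i-1))^2) = (\<Sum>i=0..m. (Y (Suc i - 1))^2)"
        by (rule sum.shift_bounds_cl_Suc_ivl)
      then have "(\<Sum>i=1..N-1. (Y (i-1))^2) = (\<Sum>i=0..N-2. (Y i)^2)"
        using m by simp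
      also have "\<dots> = (Y 0)^2 + (\<Sum>i=1..N-2. (Y i)^2)" using m by (simp add: sum.atLeast_Suc_atMost)
      also have "\<dots> \<le> SY"
      proof -
        have "(\<Sum>i=1..N-2. (Y i)^2) \<le> (\<Sum>i=1..N-1. (Y i)^2)" by (intro sum_mono2) auto
        then show ?thesis unfolding SY_def using Y0 by simp
      qed
      finally show ?thesis .
    qed
    finally show ?thesis by simp
  qed
  have B: "\<And>i. i \<le> N \<Longrightarrow> (Y i)^2 \<le> real N * S"
  proof -
    fix i assume i: "i \<le> N"
    have "(Y i)^2 = (\<Sum>k=1..i. d k)^2" unfolding d_def using telesc[of Y i] Y0 by simp
    also have "\<dots> \<le> (\<Sum>k=1..i. (d k)^2) * card {1..i}" by (rule sum_squared_le_sum_of_squares)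
    also have "\<dots> \<le> S * real N"
      unfolding S_def using i by (intro mult_mono sum_mono2) (auto intro: sum_nonneg)
    finally show "(Y i)^2 \<le> real N * S" by (simp add: mult.commute)
  qed
  have C: "SY \<le> real N * (real N * S)"
  proof -
    have "SY \<le> (\<Sum>i=1..N-1. real N * S)" unfolding SY_def using B by (intro sum_mono) auto
    also have "\<dots> = real (N-1) * (real N * S)" by simp
    also have "\<dots> \<le> real N * (real N * S)"
    proof -
      have "0 \<le> S" unfolding S_def by (simp add: sum_nonneg)
      then show ?thesis by (intro mult_right_mono) auto
    qed
    finally show ?thesis .
  qed
  have "nrm0sq h N (Hh h y) t = h * (\<Sum>i=1..N-1. (Hh h y i t)^2)"
    unfolding nrm0sq_def by (simp add: sum_distrib_left mult.commute)
  also have "\<dots> \<le> h * (real N * (real N * S))" using A C h by (intro mult_left_mono) auto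
  also have "\<dots> = (real N * h)^2 * (S / h)" using h by (simp add: field_simps power2_eq_square)
  finally show ?thesis unfolding nb .
qed

lemma L2op_Dop: "alf \<alpha> \<Longrightarrow> L2op \<alpha> \<tau> w i j = \<tau> powr (-\<alpha>) / Gamma (2-\<alpha>) * alf.Dop \<alpha> (\<lambda>s. w i s) j"
  unfolding L2op_def by (simp add: alf.Dop_def)

lemma amgm: "0 < (\<delta>::real) \<Longrightarrow> a * b \<le> a^2 / (2*\<delta>) + \<delta> * b^2 / 2"
proof -
  assume d: "0 < \<delta>"
  have "0 \<le> (a - \<delta> * b)^2" by simp
  then have "2 * \<delta> * (a * b) \<le> a^2 + \<delta>^2 * b^2" by (simp add: power2_eq_square algebra_simps)
  then show ?thesis using d by (simp add: field_simps power2_eq_square)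
qed

lemma energy_j:
  fixes y \<phi> :: "nat \<Rightarrow> nat \<Rightarrow> real"
  assumes h: "0 < h" and N: "2 \<le> N" and l: "real N * h = l" and cK: "0 < cK"
    and kk: "cK \<le> kj" and qq: "0 \<le> qj"
    and eq: "\<And>i. 1 \<le> i \<Longrightarrow> i \<le> N - 1 \<Longrightarrow> L i = kj * dxx h y i t - qj * Hh h y i t + Hh h \<phi> i t"
    and b0: "y 0 t = 0" and bN: "y N t = 0"
  shows "(\<Sum>i=1..N-1. L i * Hh h y i t * h) \<le> -(cK/3) * nrm0bsq h N (dxb h y) t + (3 * l^2 / (4 * cK)) * nrm0sq h N (Hh h \<phi>) t"
proof -
  define Z where "Z = nrm0bsq h N (dxb h y) t"
  define B where "B = nrm0sq h N (Hh h y) t"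
  define \<Phi> where "\<Phi> = nrm0sq h N (Hh h \<phi>) t"
  define A where "A = (\<Sum>i=1..N-1. dxx h y i t * Hh h y i t * h)"
  define C where "C = (\<Sum>i=1..N-1. Hh h \<phi> i t * Hh h y i t * h)"
  have l0: "0 < l" using l h N by (metis le_trans mult_pos_pos not_numeral_le_zero of_nat_0_less_iff zero_less_iff_neq_zero le0 less_le_trans N)
  have Z0: "0 \<le> Z" unfolding Z_def nrm0bsq_def using h by (intro sum_nonneg) auto
  have B0: "0 \<le> B" unfolding B_def nrm0sq_def using h by (intro sum_nonneg) auto
  have S: "(\<Sum>i=1..N-1. L i * Hh h y i t * h) = kj * A - qj * B + C"
  proof -
    have "(\<Sum>i=1..N-1. L i * Hh h y i t * h) = (\<Sum>i=1..N-1. kj * (dxx h y i t * Hh h y i t * h) - qj * ((Hh h y i t)^2 * h) + Hh h \<phi> i t * Hh h y i t * h)"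
      by (intro sum.cong refl) (auto simp: eq power2_eq_square algebra_simps)
    also have "\<dots> = kj * A - qj * B + C"
      unfolding A_def B_def C_def nrm0sq_def by (simp add: sum.distrib sum_subtractf sum_distrib_left)
    finally show ?thesis .
  qed
  have A1: "A \<le> -(2/3) * Z" unfolding A_def Z_def by (rule space1[of h N y t, OF h N b0 bN])
  have kA: "kj * A \<le> cK * A"
  proof -
    have "A \<le> 0" using A1 Z0 by linarith
    then show ?thesis using kk by (simp add: mult_right_mono_neg)
  qed
  have qB: "0 \<le> qj * B" using qq B0 by simp
  define \<delta> where "\<delta> = 2 * cK / (3 * l^2)"
  have d0: "0 < \<delta>" unfolding \<delta>_def using cK l0 by simp
  have C1: "C \<le> \<Phi> / (2 * \<delta>) + \<delta> * B / 2"
  proof -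
    have "C \<le> (\<Sum>i=1..N-1. ((Hh h \<phi> i t)^2 / (2*\<delta>) + \<delta> * (Hh h y i t)^2 / 2) * h)"
      unfolding C_def using h amgm[OF d0] by (intro sum_mono mult_right_mono) auto
    also have "\<dots> = \<Phi> / (2 * \<delta>) + \<delta> * B / 2"
      unfolding \<Phi>_def B_def nrm0sq_def
      by (simp add: sum.distrib sum_divide_distrib sum_distrib_left algebra_simps)
    finally show ?thesis .
  qed
  have BZ: "B \<le> l^2 * Z"
    using space2[of h N y t, OF h N b0 bN] unfolding B_def Z_def l .
  have dB: "\<delta> * B / 2 \<le> cK / 3 * Z"
  proof -
    have "\<delta> * B / 2 \<le> \<delta> * (l^2 * Z) / 2" using BZ d0 by (simp add: mult_left_mono)
    also have "\<dots> = cK / 3 * Z" unfolding \<delta>_def using l0 by (simp add: field_simps)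
    finally show ?thesis .
  qed
  have dP: "\<Phi> / (2 * \<delta>) = 3 * l^2 / (4 * cK) * \<Phi>" unfolding \<delta>_def using l0 cK by (simp add: field_simps)
  have "cK * A \<le> cK * (-(2/3) * Z)" by (rule mult_left_mono) (use A1 cK in auto)
  then show ?thesis unfolding S Z_def[symmetric] \<Phi>_def[symmetric] using kA qB C1 dB dP
    by (simp add: algebra_simps) 
qed

definition M2c :: "real \<Rightarrow> real \<Rightarrow> real \<Rightarrow> real \<Rightarrow> real" where
  "M2c \<alpha> l T c1 = (1 + l^2) * (3/c1) * (3 * T powr (1-\<alpha>) / Gamma (2-\<alpha>) + 3 * l^2 / (4*c1))"

lemma main_bound:
  fixes \<alpha> l T c1 :: real and k q :: "real \<Rightarrow> real" and N M :: nat and \<phi> y :: "nat \<Rightarrow> nat \<Rightarrow> real" and h \<tau> :: real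
  assumes a0: "0 < \<alpha>" and a1: "\<alpha> < 1" and l0: "0 < l" and T0: "0 < T" and c1: "0 < c1"
    and kq: "\<And>t. 0 \<le> t \<Longrightarrow> t \<le> T \<Longrightarrow> k t \<ge> c1" "\<And>t. 0 \<le> t \<Longrightarrow> t \<le> T \<Longrightarrow> q t \<ge> 0"
    and N: "2 \<le> N" and M: "2 \<le> M" and hd: "h = l / real N" and td: "\<tau> = T / real M"
    and eqn: "\<forall>i j. 1 \<le> i \<and> i \<le> N - 1 \<and> 1 \<le> j \<and> j \<le> M - 1 \<longrightarrow>
          L2op \<alpha> \<tau> (Hh h y) i j
            = k (real (j + 1) * \<tau>) * dxx h y i (j + 1)
              - q (real (j + 1) * \<tau>) * Hh h y i (j + 1) + Hh h \<phi> i (j + 1)"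
    and bc: "\<forall>j \<le> M. y 0 j = 0 \<and> y N j = 0"
  shows "(\<Sum>j = 1..M - 1. (nrm0sq h N (Hh h y) (j + 1) + nrm0bsq h N (dxb h y) (j + 1)) * \<tau>)
      \<le> M2c \<alpha> l T c1 * (nrm0sq h N (Hh h y) 1 + nrm0sq h N (Hh h y) 0
               + (\<Sum>j = 1..M - 1. nrm0sq h N (Hh h \<phi>) (j + 1) * \<tau>))"
proof -
  interpret alf \<alpha> by unfold_locales (use a0 a1 in auto)
  have h0: "0 < h" using hd l0 N by simp
  have t0: "0 < \<tau>" using td T0 M by simp
  have Nh: "real N * h = l" using hd N by simp
  have Mt: "real M * \<tau> = T" using td M by simp
  define G where "G = Gamma (2-\<alpha>)"
  have G0: "0 < G" unfolding G_def using a1 by (intro Gamma_real_pos) simp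
  define cc where "cc = \<tau> powr (-\<alpha>) / G"
  have cc0: "0 < cc" unfolding cc_def using t0 G0 by simp
  define V where "V i s = Hh h y i s" for i s
  define Z where "Z j = nrm0bsq h N (dxb h y) (j+1)" for j
  define B where "B j = nrm0sq h N (Hh h y) (j+1)" for j
  define F where "F j = nrm0sq h N (Hh h \<phi>) (j+1)" for j
  define KF where "KF = 3 * l^2 / (4 * c1)"
  define P where "P = real M powr (1-\<alpha>)"
  define X0 where "X0 = nrm0sq h N (Hh h y) 0"
  define X1 where "X1 = nrm0sq h N (Hh h y) 1"
  have Ej: "\<And>j. j \<in> {1..M-1} \<Longrightarrow> (\<Sum>i=1..N-1. (cc * Dop (\<lambda>s. V i s) j) * V i (j+1) * h) \<le> -(c1/3) * Z j + KF * F j"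
  proof -
    fix j assume j: "j \<in> {1..M-1}"
    have jt: "0 \<le> real (j+1) * \<tau>" "real (j+1) * \<tau> \<le> T"
    proof -
      show "0 \<le> real (j+1) * \<tau>" using t0 by simp
      have "real (j+1) \<le> real M" using j M by auto
      then have "real (j+1) * \<tau> \<le> real M * \<tau>" using t0 by (intro mult_right_mono) auto
      then show "real (j+1) * \<tau> \<le> T" using Mt by simp
    qed
    have bj: "y 0 (j+1) = 0" "y N (j+1) = 0" using bc j M by auto
    show "(\<Sum>i=1..N-1. (cc * Dop (\<lambda>s. V i s) j) * V i (j+1) * h) \<le> -(c1/3) * Z j + KF * F j"
      unfolding V_def Z_def F_def KF_def
    proof (rule energy_j[where h=h and N=N and l=l and cK=c1 and kj="k (real (j+1) * \<tau>)" and qj="q (real (j+1) * \<tau>)"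
        and L="\<lambda>i. cc * Dop (\<lambda>s. Hh h y i s) j" and y=y and t="j+1" and \<phi>=\<phi>, OF h0 N Nh c1 kq(1)[OF jt] kq(2)[OF jt] _ bj])
      fix i assume i: "1 \<le> i" "i \<le> N - 1"
      have "cc * Dop (\<lambda>s. Hh h y i s) j = L2op \<alpha> \<tau> (Hh h y) i j"
        unfolding cc_def G_def by (simp add: L2op_Dop[OF alf_axioms])
      also have "\<dots> = k (real (j + 1) * \<tau>) * dxx h y i (j + 1) - q (real (j + 1) * \<tau>) * Hh h y i (j + 1) + Hh h \<phi> i (j + 1)"
        using eqn i j by auto
      finally show "cc * Dop (\<lambda>s. Hh h y i s) j = k (real (j + 1) * \<tau>) * dxx h y i (j + 1) - q (real (j + 1) * \<tau>) * Hh h y i (j + 1) + Hh h \<phi> i (j + 1)" .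
    qed
  qed
  have Lsum: "(\<Sum>j=1..M-1. \<tau> * (\<Sum>i=1..N-1. (cc * Dop (\<lambda>s. V i s) j) * V i (j+1) * h))
      = (\<tau> * cc * h) * (\<Sum>i=1..N-1. \<Sum>j=1..M-1. Dop (\<lambda>s. V i s) j * V i (j+1))"
  proof -
    have "(\<Sum>j=1..M-1. \<tau> * (\<Sum>i=1..N-1. (cc * Dop (\<lambda>s. V i s) j) * V i (j+1) * h))
        = (\<Sum>j=1..M-1. \<Sum>i=1..N-1. (\<tau> * cc * h) * (Dop (\<lambda>s. V i s) j * V i (j+1)))"
      by (simp add: sum_distrib_left mult_ac)
    also have "\<dots> = (\<Sum>i=1..N-1. \<Sum>j=1..M-1. (\<tau> * cc * h) * (Dop (\<lambda>s. V i s) j * V i (j+1)))"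
      by (rule sum.swap)
    also have "\<dots> = (\<tau> * cc * h) * (\<Sum>i=1..N-1. \<Sum>j=1..M-1. Dop (\<lambda>s. V i s) j * V i (j+1))"
      by (simp add: sum_distrib_left)
    finally show ?thesis .
  qed
  have low: "(\<Sum>i=1..N-1. \<Sum>j=1..M-1. Dop (\<lambda>s. V i s) j * V i (j+1)) \<ge> -3 * P * (X0 + X1) / h"
  proof -
    have "(\<Sum>i=1..N-1. \<Sum>j=1..M-1. Dop (\<lambda>s. V i s) j * V i (j+1)) \<ge> (\<Sum>i=1..N-1. -3 * P * ((V i 0)^2 + (V i 1)^2))"
      unfolding P_def by (intro sum_mono time_pos[OF M])
    also have "(\<Sum>i=1..N-1. -3 * P * ((V i 0)^2 + (V i 1)^2)) = -3 * P * (X0 + X1) / h"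
    proof -
      have Xs: "X0 + X1 = h * (\<Sum>i=1..N-1. (V i 0)^2 + (V i 1)^2)"
        unfolding X0_def X1_def nrm0sq_def V_def by (simp add: sum.distrib sum_distrib_left mult.commute distrib_left)
      have "(\<Sum>i=1..N-1. -3 * P * ((V i 0)^2 + (V i 1)^2)) = -3 * P * (\<Sum>i=1..N-1. (V i 0)^2 + (V i 1)^2)"
        by (simp add: sum_distrib_left)
      also have "\<dots> = -3 * P * (X0 + X1) / h" unfolding Xs using h0 by simp
      finally show ?thesis .
    qed
    finally show ?thesis .
  qed
  have key: "\<tau> * cc * P = T powr (1-\<alpha>) / G"
  proof -
    have e1: "\<tau> powr (1-\<alpha>) = \<tau> * \<tau> powr (-\<alpha>)"
    proof -
      have "\<tau> powr (1 + (-\<alpha>)) = \<tau> powr 1 * \<tau> powr (-\<alpha>)" by (rule powr_add)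
      then show ?thesis using t0 by simp
    qed
    have "\<tau> * cc * P = (\<tau> * \<tau> powr (-\<alpha>)) * real M powr (1-\<alpha>) / G"
      unfolding cc_def P_def by simp
    also have "\<dots> = \<tau> powr (1-\<alpha>) * real M powr (1-\<alpha>) / G" unfolding e1 ..
    also have "\<tau> powr (1-\<alpha>) * real M powr (1-\<alpha>) = (\<tau> * real M) powr (1-\<alpha>)"
      using t0 by (simp add: powr_mult)
    also have "\<tau> * real M = T" using Mt by (simp add: mult.commute)
    finally show ?thesis .
  qed
  have X01: "0 \<le> X0" "0 \<le> X1" unfolding X0_def X1_def nrm0sq_def using h0 by (auto intro!: sum_nonneg)
  have sumE: "(\<Sum>j=1..M-1. \<tau> * (\<Sum>i=1..N-1. (cc * Dop (\<lambda>s. V i s) j) * V i (j+1) * h))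
      \<le> (\<Sum>j=1..M-1. \<tau> * (-(c1/3) * Z j + KF * F j))"
    using Ej t0 by (intro sum_mono mult_left_mono) auto
  have lowS: "-3 * (T powr (1-\<alpha>) / G) * (X0 + X1) \<le> (\<Sum>j=1..M-1. \<tau> * (-(c1/3) * Z j + KF * F j))"
  proof -
    have "(\<tau> * cc * h) * (-3 * P * (X0 + X1) / h) \<le> (\<tau> * cc * h) * (\<Sum>i=1..N-1. \<Sum>j=1..M-1. Dop (\<lambda>s. V i s) j * V i (j+1))"
      using low t0 cc0 h0 by (intro mult_left_mono) auto
    moreover have "(\<tau> * cc * h) * (-3 * P * (X0 + X1) / h) = -3 * (\<tau> * cc * P) * (X0 + X1)"
      using h0 by (simp add: field_simps)
    ultimately show ?thesis using Lsum sumE unfolding key by linarith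
  qed
  have SZ: "(\<Sum>j=1..M-1. \<tau> * (-(c1/3) * Z j + KF * F j)) = -(c1/3) * (\<Sum>j=1..M-1. Z j * \<tau>) + KF * (\<Sum>j=1..M-1. F j * \<tau>)"
  proof -
    have "(\<Sum>j=1..M-1. \<tau> * (-(c1/3) * Z j + KF * F j)) = (\<Sum>j=1..M-1. (-(c1/3)) * (Z j * \<tau>) + KF * (F j * \<tau>))"
      by (intro sum.cong refl) (simp add: algebra_simps)
    also have "\<dots> = (\<Sum>j=1..M-1. (-(c1/3)) * (Z j * \<tau>)) + (\<Sum>j=1..M-1. KF * (F j * \<tau>))"
      by (rule sum.distrib)
    also have "\<dots> = -(c1/3) * (\<Sum>j=1..M-1. Z j * \<tau>) + KF * (\<Sum>j=1..M-1. F j * \<tau>)"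
      by (simp only: sum_distrib_left)
    finally show ?thesis .
  qed
  define SZs where "SZs = (\<Sum>j=1..M-1. Z j * \<tau>)"
  define SF where "SF = (\<Sum>j=1..M-1. F j * \<tau>)"
  have SF0: "0 \<le> SF" unfolding SF_def F_def nrm0sq_def using t0 h0 by (auto intro!: sum_nonneg mult_nonneg_nonneg)
  have Zb: "(c1/3) * SZs \<le> 3 * (T powr (1-\<alpha>) / G) * (X0 + X1) + KF * SF"
    using lowS SZ unfolding SZs_def SF_def by linarith
  have BZ: "\<And>j. j \<in> {1..M-1} \<Longrightarrow> B j \<le> l^2 * Z j"
  proof -
    fix j assume j: "j \<in> {1..M-1}"
    have bj: "y 0 (j+1) = 0" "y N (j+1) = 0" using bc j M by auto
    show "B j \<le> l^2 * Z j" using space2[of h N y "j+1", OF h0 N bj] unfolding B_def Z_def Nh .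
  qed
  have LHS: "(\<Sum>j = 1..M - 1. (B j + Z j) * \<tau>) \<le> (1 + l^2) * SZs"
  proof -
    have "(\<Sum>j = 1..M - 1. (B j + Z j) * \<tau>) \<le> (\<Sum>j = 1..M - 1. (1 + l^2) * (Z j * \<tau>))"
      using BZ t0 by (intro sum_mono) (auto simp: algebra_simps intro!: mult_right_mono)
    then show ?thesis unfolding SZs_def by (simp add: sum_distrib_left)
  qed
  define A where "A = 3 * (T powr (1-\<alpha>) / G)"
  have A0: "0 \<le> A" unfolding A_def using G0 by simp
  have KF0: "0 \<le> KF" unfolding KF_def using c1 by simp
  have fin: "(1 + l^2) * SZs \<le> M2c \<alpha> l T c1 * (X1 + X0 + SF)"
  proof -
    have "SZs \<le> (3/c1) * (A * (X0 + X1) + KF * SF)" using Zb c1 unfolding A_def by (simp add: field_simps)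
    also have "\<dots> \<le> (3/c1) * ((A + KF) * (X1 + X0 + SF))"
    proof -
      have "A * (X0 + X1) \<le> A * (X1 + X0 + SF)" using A0 SF0 by (intro mult_left_mono) auto
      moreover have "KF * SF \<le> KF * (X1 + X0 + SF)" using KF0 X01 by (intro mult_left_mono) auto
      ultimately show ?thesis using c1 by (intro mult_left_mono) (auto simp: algebra_simps)
    qed
    finally have "SZs \<le> (3/c1) * ((A + KF) * (X1 + X0 + SF))" .
    then have "(1 + l^2) * SZs \<le> (1 + l^2) * ((3/c1) * ((A + KF) * (X1 + X0 + SF)))"
      by (intro mult_left_mono) auto
    also have "\<dots> = M2c \<alpha> l T c1 * (X1 + X0 + SF)"
    proof -
      have "M2c \<alpha> l T c1 = (1 + l^2) * (3/c1) * (A + KF)" unfolding M2c_def A_def KF_def G_def by simp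
      then show ?thesis by (simp only: mult.assoc)
    qed
    finally show ?thesis .
  qed
  show ?thesis using LHS fin unfolding B_def Z_def X0_def X1_def SF_def F_def SZs_def by simp
qed

theorem theorem2:
  fixes \<alpha> l T c1 :: real and k q :: "real \<Rightarrow> real"
  assumes "0 < \<alpha>" "\<alpha> < 1" "0 < l" "0 < T" "0 < c1"
    and "\<And>t. 0 \<le> t \<Longrightarrow> t \<le> T \<Longrightarrow> k t \<ge> c1"
    and "\<And>t. 0 \<le> t \<Longrightarrow> t \<le> T \<Longrightarrow> q t \<ge> 0"
  shows "\<exists>M2 > 0. \<forall>(N::nat) (M::nat) (\<phi>::nat \<Rightarrow> nat \<Rightarrow> real) (u0::real \<Rightarrow> real)
                    (y::nat \<Rightarrow> nat \<Rightarrow> real).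
    let h = l / real N; \<tau> = T / real M in
    (2 \<le> N \<and> 2 \<le> M
     \<and> (\<forall>i j. 1 \<le> i \<and> i \<le> N - 1 \<and> 1 \<le> j \<and> j \<le> M - 1 \<longrightarrow>
          L2op \<alpha> \<tau> (Hh h y) i j
            = k (real (j + 1) * \<tau>) * dxx h y i (j + 1)
              - q (real (j + 1) * \<tau>) * Hh h y i (j + 1) + Hh h \<phi> i (j + 1))
     \<and> (\<forall>j \<le> M. y 0 j = 0 \<and> y N j = 0)
     \<and> (\<forall>i \<le> N. y i 0 = u0 (real i * h)))
    \<longrightarrow>
    (\<Sum>j = 1..M - 1. (nrm0sq h N (Hh h y) (j + 1) + nrm0bsq h N (dxb h y) (j + 1)) * \<tau>)
      \<le> M2 * (nrm0sq h N (Hh h y) 1 + nrm0sq h N (Hh h y) 0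
               + (\<Sum>j = 1..M - 1. nrm0sq h N (Hh h \<phi>) (j + 1) * \<tau>))"
proof -
  have G0: "0 < Gamma (2 - \<alpha>)" using assms(2) by (intro Gamma_real_pos) simp
  have pa: "0 < 3 * T powr (1-\<alpha>) / Gamma (2-\<alpha>)" using assms(4) G0 by simp
  have pb: "0 < 3 * l^2 / (4*c1)" using assms(3,5) by simp
  have pos: "0 < M2c \<alpha> l T c1"
    unfolding M2c_def using pa pb assms(5)
    by (intro mult_pos_pos add_pos_pos) (auto simp: add_pos_nonneg)
  show ?thesis
  proof (rule exI[of _ "M2c \<alpha> l T c1"], rule conjI[OF pos], intro allI)
    fix N M :: nat and \<phi> :: "nat \<Rightarrow> nat \<Rightarrow> real" and u0 :: "real \<Rightarrow> real" and y :: "nat \<Rightarrow> nat \<Rightarrow> real"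
    show "let h = l / real N; \<tau> = T / real M in
    (2 \<le> N \<and> 2 \<le> M
     \<and> (\<forall>i j. 1 \<le> i \<and> i \<le> N - 1 \<and> 1 \<le> j \<and> j \<le> M - 1 \<longrightarrow>
          L2op \<alpha> \<tau> (Hh h y) i j
            = k (real (j + 1) * \<tau>) * dxx h y i (j + 1)
              - q (real (j + 1) * \<tau>) * Hh h y i (j + 1) + Hh h \<phi> i (j + 1))
     \<and> (\<forall>j \<le> M. y 0 j = 0 \<and> y N j = 0)
     \<and> (\<forall>i \<le> N. y i 0 = u0 (real i * h)))
    \<longrightarrow>
    (\<Sum>j = 1..M - 1. (nrm0sq h N (Hh h y) (j + 1) + nrm0bsq h N (dxb h y) (j + 1)) * \<tau>)
      \<le> M2c \<alpha> l T c1 * (nrm0sq h N (Hh h y) 1 + nrm0sq h N (Hh h y) 0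
               + (\<Sum>j = 1..M - 1. nrm0sq h N (Hh h \<phi>) (j + 1) * \<tau>))"
      unfolding Let_def
    proof (intro impI, elim conjE)
      assume N: "2 \<le> N" and M: "2 \<le> M"
        and eqn: "\<forall>i j. 1 \<le> i \<and> i \<le> N - 1 \<and> 1 \<le> j \<and> j \<le> M - 1 \<longrightarrow>
          L2op \<alpha> (T / real M) (Hh (l / real N) y) i j
            = k (real (j + 1) * (T / real M)) * dxx (l / real N) y i (j + 1)
              - q (real (j + 1) * (T / real M)) * Hh (l / real N) y i (j + 1) + Hh (l / real N) \<phi> i (j + 1)"
        and bc: "\<forall>j \<le> M. y 0 j = 0 \<and> y N j = 0"
      show "(\<Sum>j = 1..M - 1. (nrm0sq (l / real N) N (Hh (l / real N) y) (j + 1) + nrm0bsq (l / real N) N (dxb (l / real N) y) (j + 1)) * (T / real M))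
      \<le> M2c \<alpha> l T c1 * (nrm0sq (l / real N) N (Hh (l / real N) y) 1 + nrm0sq (l / real N) N (Hh (l / real N) y) 0
               + (\<Sum>j = 1..M - 1. nrm0sq (l / real N) N (Hh (l / real N) \<phi>) (j + 1) * (T / real M)))"
        by (rule main_bound[OF assms(1-5) assms(6) assms(7) N M refl refl eqn bc])
    qed
  qed
qed

end
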